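(* Let $n\ge 1$, let $\mathbf{X}=\{x_0,\dots,x_{n-1}\}$, and let $\pi$ be a linear transformation over $\mathbf{X}$. Then every unitary matrix $U$ of size $2^n\times 2^n$ has a unique (up to isomorphism) reduced and normalized linearly transformed QMDD (LTQMDD) respecting $\pi$, i.e., a unique reduced and normalized LTQMDD $(v,e,\pi)$ whose semantics is $U$.
   Context: Indices of vectors and matrices are $0$-based; a natural number $0\le i<2^n$ is identified with its $n$-bit Boolean vector $(b_0\cdots b_{n-1})_2$, where $b_k$ is the value of $x_k$ under the standard order $[x_0,\dots,x_{n-1}]$ (so $x_0$ is the most significant bit). Linear transformations. For $\mathbf{Y}\subseteq\mathbf{X}$, its linear combination is $\bigoplus_{x\in\mathbf{Y}}x$ (XOR). A set $\Pi$ of linear combinations is fully ranked if every $x\in\mathbf{X}$ is the XOR of some subset of $\Pi$. A linear transformation is a sequence $\pi=[\pi_0,\dots,\pi_{n-1}]$ whose entries are the $n$ elements of a fully ranked set of linear combinations. It induces a bijection $\pi:\{0,1\}^n\to\{0,1\}^n$ by $\pi(v)_i=\pi_i(v)$ (the value of the linear combination $\pi_i$ under the assignment $v$), hence a permutation of $\{0,\dots,2^n-1\}$. For a $2^n\times2^n$ matrix $U=(u_{i,j})$, the linearly transformed matrix $U^{\pi}$ is defined by $u^{\pi}_{i,j}=u_{\pi(i),\pi(j)}$ for $0\le i,j<2^n$. QMDDs. A QMDD is a rooted directed acyclic graph given by a root edge $e$ pointing to a root node $v$. Nodes are internal or terminal. Each internal node $v$ has an index $\mathrm{ind}(v)\in\{0,\dots,n-1\}$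 and four outgoing edges $e_0(v),e_1(v),e_2(v),e_3(v)$ to successors $v_0,v_1,v_2,v_3$; every edge (including the root edge) carries a complex weight $w(e)$. There is a single terminal node, labeled $1$, with index $n$ and no successors. Along every path from the root to the terminal, indices strictly increase. Semantics: for an edge $e$ pointing to node $v$ considered from level $j\le \mathrm{ind}(v)$, with $J_m$ the $m\times m$ all-ones matrix and $s=\mathrm{ind}(v)-j$: if $v$ is terminal, $M^j_{(v,e)}=w(e)\,J_{2^s}$; if $v$ is internal, $M^j_{(v,e)}=w(e)\,J_{2^s}\otimes\begin{bmatrix}M^{k}_{(v_0,e_0)}&M^{k}_{(v_1,e_1)}\\ M^{k}_{(v_2,e_2)}&M^{k}_{(v_3,e_3)}\end{bmatrix}$ with $k=\mathrm{ind}(v)+1$ (the four blocks correspond to row/column value of the variable at level $\mathrm{ind}(v)$: block $0$ = row $0$, column $0$; block $1$ = row $0$, column $1$; block $2$ = row $1$, column $0$; block $3$ = row $1$, column $1$). The matrix represented by the QMDD is $M^0_{(v,e)}$, a $2^n\times 2^n$ matrix. Reduced: two internal nodes are isomorphic if they have the same index and their corresponding outgoing edges point to the same nodes with the same weights. A QMDD is reduced if (RI) no two distinct internal nodes are isomorphic, and (RS) no internal node has all four outgoing edges pointing to the same node with the same weight. Normalized: for every internal node, the largest magnitude among the nonzero weights of its outgoing edges is $1$, and among the edges attaining that maximum magnitude, the leftmost one has weight exactly $1$. LTQMDDs. A linearly transformed QMDD is a triple $(v,e,\pi)$ consisting of a QMDD $(v,e)$ and a linear transformation $\pi$; it is said to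 respect $\pi$, and it is reduced/normalized if the QMDD $(v,e)$ is. Its semantics is the linearly transformed matrix $(M^0_{(v,e)})^{\pi}$ of the matrix represented by $(v,e)$.
   Formalization: A normalized QMDD also has every outgoing edge of weight 0 of an internal node pointing to the terminal node 1. The statement above fails without it. *)

theory Defs
  imports Complex_Main
begin

text \<open>A 2^n x 2^n complex matrix is represented by its entry function
  nat => nat => complex; only the entries with both indices below 2^n matter.\<close>

type_synonym cmatrix = "nat \<Rightarrow> nat \<Rightarrow> complex"

definition unitary_mat :: "nat \<Rightarrow> cmatrix \<Rightarrow> bool" where
  "unitary_mat N U \<longleftrightarrow>
     (\<forall>i<N. \<forall>j<N. (\<Sum>k<N. cnj (U k i) * U k j) = (if i = j then 1 else 0))"

definition mat_eq :: "nat \<Rightarrow> cmatrix \<Rightarrow> cmatrix \<Rightarrow> bool" where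
  "mat_eq N A B \<longleftrightarrow> (\<forall>i<N. \<forall>j<N. A i j = B i j)"

text \<open>Value b_k of variable x_k in the n-bit representation of i (x_0 is the
  most significant bit).\<close>
definition var_val :: "nat \<Rightarrow> nat \<Rightarrow> nat \<Rightarrow> bool" where
  "var_val n i k \<longleftrightarrow> odd (i div 2 ^ (n - 1 - k))"

text \<open>A linear combination over X = {x_0..x_(n-1)} is given by the set Y of
  (indices of) variables it XORs.\<close>

definition xor_lc :: "nat set set \<Rightarrow> nat set" where
  "xor_lc S = {x. odd (card {Y \<in> S. x \<in> Y})}"

definition fully_ranked :: "nat \<Rightarrow> nat set set \<Rightarrow> bool" where
  "fully_ranked n P \<longleftrightarrow> (\<forall>i<n. \<exists>S\<subseteq>P. xor_lc S = {i})"

definition is_lin_trans :: "nat \<Rightarrow> nat set list \<Rightarrow> bool" where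
  "is_lin_trans n \<pi> \<longleftrightarrow> length \<pi> = n \<and> distinct \<pi> \<and>
     (\<forall>Y \<in> set \<pi>. Y \<subseteq> {0..<n}) \<and> fully_ranked n (set \<pi>)"

definition lc_val :: "nat \<Rightarrow> nat set \<Rightarrow> nat \<Rightarrow> bool" where
  "lc_val n Y i \<longleftrightarrow> odd (card {x \<in> Y. var_val n i x})"

definition lt_perm :: "nat \<Rightarrow> nat set list \<Rightarrow> nat \<Rightarrow> nat" where
  "lt_perm n \<pi> i = (\<Sum>k<n. if lc_val n (\<pi> ! k) i then 2 ^ (n - 1 - k) else 0)"

definition lt_mat :: "nat \<Rightarrow> nat set list \<Rightarrow> cmatrix \<Rightarrow> cmatrix" where
  "lt_mat n \<pi> U = (\<lambda>i j. U (lt_perm n \<pi> i) (lt_perm n \<pi> j))"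

text \<open>Nodes are natural numbers.  \<open>inodes\<close> is the set of internal nodes,
  \<open>tnode\<close> the terminal node; \<open>ind v\<close>, \<open>succ v k\<close>, \<open>wt v k\<close> (k < 4) are the
  index, the k-th successor and the weight of the k-th outgoing edge of an
  internal node v; the root edge points to \<open>root\<close> and has weight \<open>root_wt\<close>.\<close>

record qmdd =
  inodes :: "nat set"
  tnode :: nat
  ind :: "nat \<Rightarrow> nat"
  succ :: "nat \<Rightarrow> nat \<Rightarrow> nat"
  wt :: "nat \<Rightarrow> nat \<Rightarrow> complex"
  root :: nat
  root_wt :: complex

definition all_nodes :: "qmdd \<Rightarrow> nat set" where
  "all_nodes Q = insert (tnode Q) (inodes Q)"

definition nind :: "nat \<Rightarrow> qmdd \<Rightarrow> nat \<Rightarrow> nat" where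
  "nind n Q v = (if v \<in> inodes Q then ind Q v else n)"

definition edge_rel :: "qmdd \<Rightarrow> (nat \<times> nat) set" where
  "edge_rel Q = {(v, succ Q v k) | v k. v \<in> inodes Q \<and> k < 4}"

definition is_qmdd :: "nat \<Rightarrow> qmdd \<Rightarrow> bool" where
  "is_qmdd n Q \<longleftrightarrow>
     finite (inodes Q) \<and> tnode Q \<notin> inodes Q \<and> root Q \<in> all_nodes Q \<and>
     (\<forall>v \<in> inodes Q. ind Q v < n) \<and>
     (\<forall>v \<in> inodes Q. \<forall>k<4. succ Q v k \<in> all_nodes Q \<and> ind Q v < nind n Q (succ Q v k)) \<and>
     (\<forall>v \<in> all_nodes Q. (root Q, v) \<in> (edge_rel Q)\<^sup>*)"

text \<open>Semantics.  \<open>nsem n Q v j r c\<close> is the (r,c) entry (global indices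
  r, c < 2^n) of the matrix represented by node v considered from level j,
  with edge weight 1; i.e. M^j_(v,e) = w(e) * nsem ...  Levels above ind(v)
  are skipped (the J factor), at level ind(v) the bits of x_ind(v) in r and c
  select the block.\<close>
function nsem :: "nat \<Rightarrow> qmdd \<Rightarrow> nat \<Rightarrow> nat \<Rightarrow> nat \<Rightarrow> nat \<Rightarrow> complex" where
  "nsem n Q v j r c =
     (if n \<le> j then 1
      else if v \<in> inodes Q \<and> ind Q v = j then
        (let k = 2 * (if var_val n r j then 1 else 0) + (if var_val n c j then 1 else 0)
         in wt Q v k * nsem n Q (succ Q v k) (Suc j) r c)
      else nsem n Q v (Suc j) r c)"
  by pat_completeness auto
termination
  by (relation "measure (\<lambda>(n, Q, v, j, r, c). n - j)") auto

definition qmdd_mat :: "nat \<Rightarrow> qmdd \<Rightarrow> cmatrix" where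
  "qmdd_mat n Q = (\<lambda>r c. root_wt Q * nsem n Q (root Q) 0 r c)"

definition iso_nodes :: "qmdd \<Rightarrow> nat \<Rightarrow> nat \<Rightarrow> bool" where
  "iso_nodes Q u v \<longleftrightarrow> ind Q u = ind Q v \<and>
     (\<forall>k<4. succ Q u k = succ Q v k \<and> wt Q u k = wt Q v k)"

definition reduced :: "qmdd \<Rightarrow> bool" where
  "reduced Q \<longleftrightarrow>
     (\<forall>u \<in> inodes Q. \<forall>v \<in> inodes Q. u \<noteq> v \<longrightarrow> \<not> iso_nodes Q u v) \<and>
     (\<forall>v \<in> inodes Q. \<not> (\<forall>k<4. succ Q v k = succ Q v 0 \<and> wt Q v k = wt Q v 0))"

text \<open>Normalization.  Besides the magnitude condition of the paper we impose
  the standard QMDD convention that 0-weighted edges point to the terminal.\<close>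
definition normalized :: "qmdd \<Rightarrow> bool" where
  "normalized Q \<longleftrightarrow>
     (\<forall>v \<in> inodes Q.
        (\<forall>k<4. wt Q v k = 0 \<longrightarrow> succ Q v k = tnode Q) \<and>
        (\<forall>k<4. cmod (wt Q v k) \<le> 1) \<and>
        (\<exists>k<4. cmod (wt Q v k) = 1 \<and> wt Q v k = 1 \<and>
               (\<forall>k'<k. cmod (wt Q v k') \<noteq> 1)))"

definition qmdd_iso :: "qmdd \<Rightarrow> qmdd \<Rightarrow> bool" where
  "qmdd_iso Q1 Q2 \<longleftrightarrow> (\<exists>f. bij_betw f (all_nodes Q1) (all_nodes Q2) \<and>
     f (tnode Q1) = tnode Q2 \<and> f ` inodes Q1 = inodes Q2 \<and>
     f (root Q1) = root Q2 \<and> root_wt Q1 = root_wt Q2 \<and>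
     (\<forall>v \<in> inodes Q1. ind Q2 (f v) = ind Q1 v \<and>
        (\<forall>k<4. succ Q2 (f v) k = f (succ Q1 v k) \<and> wt Q2 (f v) k = wt Q1 v k)))"

type_synonym ltqmdd = "qmdd \<times> nat set list"

definition is_ltqmdd :: "nat \<Rightarrow> ltqmdd \<Rightarrow> bool" where
  "is_ltqmdd n L \<longleftrightarrow> is_qmdd n (fst L) \<and> is_lin_trans n (snd L)"

definition lt_reduced :: "ltqmdd \<Rightarrow> bool" where
  "lt_reduced L \<longleftrightarrow> reduced (fst L)"

definition lt_normalized :: "ltqmdd \<Rightarrow> bool" where
  "lt_normalized L \<longleftrightarrow> normalized (fst L)"

definition ltqmdd_sem :: "nat \<Rightarrow> ltqmdd \<Rightarrow> cmatrix" where
  "ltqmdd_sem n L = lt_mat n (snd L) (qmdd_mat n (fst L))"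

definition ltqmdd_iso :: "ltqmdd \<Rightarrow> ltqmdd \<Rightarrow> bool" where
  "ltqmdd_iso L1 L2 \<longleftrightarrow> snd L1 = snd L2 \<and> qmdd_iso (fst L1) (fst L2)"

end

theory Submission
  imports Defs
begin

lemma sum_bits_div:
  fixes f :: "nat \<Rightarrow> bool"
  shows "i < n \<Longrightarrow> ((\<Sum>q<n. if f q then 2 ^ q else 0) div 2 ^ i) mod 2 = (if f i then 1 else (0::nat))"
proof (induction n arbitrary: f i)
  case 0 then show ?case by simp
next
  case (Suc n)
  have e: "(\<Sum>q<Suc n. if f q then 2 ^ q else 0) = (if f 0 then 1 else 0) + 2 * (\<Sum>q<n. if f (Suc q) then 2 ^ q else (0::nat))"
    unfolding sum.lessThan_Suc_shift by (auto simp add: sum_distrib_left if_distrib intro!: sum.cong)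
  show ?case
  proof (cases i)
    case 0 then show ?thesis using e by simp
  next
    case (Suc i')
    have "(\<Sum>q<Suc n. if f q then 2 ^ q else 0) div 2 ^ i = (\<Sum>q<n. if f (Suc q) then 2 ^ q else (0::nat)) div 2 ^ i'"
      unfolding e Suc by (simp add: div_mult2_eq)
    then show ?thesis using Suc.IH[of i' "\<lambda>q. f (Suc q)"] Suc Suc.prems by simp
  qed
qed

lemma sum_bits_less:
  fixes f :: "nat \<Rightarrow> bool"
  shows "(\<Sum>q<n. if f q then 2 ^ q else 0) < (2::nat) ^ n"
proof (induction n)
  case 0 then show ?case by simp
next
  case (Suc n)
  have "(\<Sum>q<Suc n. if f q then 2 ^ q else (0::nat)) \<le> (\<Sum>q<n. if f q then 2 ^ q else 0) + 2 ^ n"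
    by simp
  then show ?case using Suc by simp
qed

lemma var_val_bit: "k < n \<Longrightarrow> var_val n i k = bit i (n - 1 - k)"
  by (simp add: var_val_def bit_iff_odd)

lemma eq_by_var_val:
  assumes "i < 2 ^ n" "j < 2 ^ n" "\<forall>k<n. var_val n i k = var_val n j k"
  shows "i = j"
proof -
  have "\<forall>q<n. bit i q = bit j q"
  proof (intro allI impI)
    fix q assume q: "q < n"
    have "n - 1 - (n - 1 - q) = q" using q by simp
    then show "bit i q = bit j q" using assms(3)[rule_format, of "n - 1 - q"] q
      by (metis var_val_bit diff_less le_add_diff_inverse2 less_imp_diff_less
          nat_less_le zero_less_one less_nat_zero_code linorder_neqE_nat)
  qed
  then have "take_bit n i = take_bit n j"
    by (auto simp add: bit_eq_iff bit_take_bit_iff)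
  then show ?thesis using assms by (simp add: take_bit_nat_eq_self)
qed

lemma lt_perm_alt: "lt_perm n \<pi> i = (\<Sum>q<n. if lc_val n (\<pi> ! (n - Suc q)) i then 2 ^ q else 0)"
proof -
  have "lt_perm n \<pi> i = (\<Sum>q<n. (\<lambda>k. if lc_val n (\<pi> ! k) i then 2 ^ (n - 1 - k) else 0) (n - Suc q))"
    unfolding lt_perm_def by (rule sum.nat_diff_reindex[symmetric])
  also have "\<dots> = (\<Sum>q<n. if lc_val n (\<pi> ! (n - Suc q)) i then 2 ^ q else 0)"
    by (rule sum.cong) auto
  finally show ?thesis .
qed

lemma lt_perm_less: "lt_perm n \<pi> i < 2 ^ n"
  unfolding lt_perm_alt by (rule sum_bits_less)

lemma lt_perm_bits: "k < n \<Longrightarrow> var_val n (lt_perm n \<pi> i) k = lc_val n (\<pi> ! k) i"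
proof -
  assume k: "k < n"
  have "((lt_perm n \<pi> i) div 2 ^ (n - 1 - k)) mod 2 = (if lc_val n (\<pi> ! (n - Suc (n - 1 - k))) i then 1 else 0)"
    unfolding lt_perm_alt by (rule sum_bits_div) (use k in simp)
  moreover have "n - Suc (n - 1 - k) = k" using k by simp
  ultimately show ?thesis unfolding var_val_def by (simp add: odd_iff_mod_2_eq_one)
qed

lemma even_sum_card:
  fixes g :: "'a \<Rightarrow> nat"
  shows "finite A \<Longrightarrow> even (sum g A) \<longleftrightarrow> even (card {x\<in>A. odd (g x)})"
proof (induction A rule: finite_induct)
  case empty then show ?case by simp
next
  case (insert a A)
  have fin: "finite {x\<in>A. odd (g x)}" using insert by simp
  show ?case
  proof (cases "odd (g a)")
    case True
    then have "{x\<in>insert a A. odd (g x)} = insert a {x\<in>A. odd (g x)}" by auto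
    moreover have "a \<notin> {x\<in>A. odd (g x)}" using insert by simp
    ultimately show ?thesis using insert True fin by simp
  next
    case False
    then have "{x\<in>insert a A. odd (g x)} = {x\<in>A. odd (g x)}" by auto
    then show ?thesis using insert False by simp
  qed
qed

lemma xor_parity:
  assumes fin: "finite S" and sub: "\<forall>Y\<in>S. Y \<subseteq> {0..<n}" and x: "xor_lc S = {m}" and m: "m < n"
  shows "var_val n i m \<longleftrightarrow> odd (card {Y\<in>S. lc_val n Y i})"
proof -
  let ?P = "\<lambda>x. var_val n i x"
  have c1: "card {x\<in>Y. ?P x} = (\<Sum>x<n. if x \<in> Y \<and> ?P x then 1 else 0)" if "Y \<in> S" for Y
  proof -
    have "{x\<in>Y. ?P x} = {x\<in>{..<n}. x \<in> Y \<and> ?P x}" using that sub by (auto simp: subset_eq)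
    then show ?thesis by (simp add: sum.If_cases Int_def)
  qed
  have "(\<Sum>Y\<in>S. card {x\<in>Y. ?P x}) = (\<Sum>Y\<in>S. \<Sum>x<n. if x \<in> Y \<and> ?P x then 1 else (0::nat))"
    using c1 by (rule sum.cong[OF refl])
  also have "\<dots> = (\<Sum>x<n. \<Sum>Y\<in>S. if x \<in> Y \<and> ?P x then 1 else (0::nat))"
    by (rule sum.swap)
  also have "\<dots> = (\<Sum>x<n. if ?P x then card {Y\<in>S. x \<in> Y} else 0)"
    by (rule sum.cong[OF refl]) (simp add: sum.If_cases fin Int_def)
  finally have eq: "(\<Sum>Y\<in>S. card {x\<in>Y. ?P x}) = (\<Sum>x<n. if ?P x then card {Y\<in>S. x \<in> Y} else 0)" .
  have s1: "{x\<in>{..<n}. odd (if ?P x then card {Y\<in>S. x \<in> Y} else 0)} = (if ?P m then {m} else {})"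
  proof -
    have "odd (card {Y\<in>S. x \<in> Y}) \<longleftrightarrow> x = m" for x
      using x unfolding xor_lc_def by (metis (no_types, lifting) mem_Collect_eq singleton_iff)
    then have o: "odd (if ?P x then card {Y\<in>S. x \<in> Y} else 0) \<longleftrightarrow> ?P x \<and> x = m" for x
      by simp
    show ?thesis
      by (rule set_eqI, simp only: o mem_Collect_eq lessThan_iff) (use m in auto)
  qed
  have s2: "{Y\<in>S. odd (card {x\<in>Y. ?P x})} = {Y\<in>S. lc_val n Y i}"
    unfolding lc_val_def by simp
  have A: "even (\<Sum>Y\<in>S. card {x\<in>Y. ?P x}) \<longleftrightarrow> even (card {Y\<in>S. lc_val n Y i})"
    using even_sum_card[OF fin, of "\<lambda>Y. card {x\<in>Y. ?P x}"] s2 by simp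
  have B: "even (\<Sum>x<n. if ?P x then card {Y\<in>S. x \<in> Y} else 0) \<longleftrightarrow> \<not> ?P m"
    using even_sum_card[of "{..<n}" "\<lambda>x. if ?P x then card {Y\<in>S. x \<in> Y} else 0"] s1 by simp
  have "even (card {Y\<in>S. lc_val n Y i}) \<longleftrightarrow> \<not> ?P m"
    using A B unfolding eq by blast
  then show ?thesis by blast
qed

lemma lt_perm_inj:
  assumes lt: "is_lin_trans n \<pi>" and i: "i < 2 ^ n" and j: "j < 2 ^ n"
    and eq: "lt_perm n \<pi> i = lt_perm n \<pi> j"
  shows "i = j"
proof (rule eq_by_var_val[OF i j], intro allI impI)
  fix m assume m: "m < n"
  from lt have len: "length \<pi> = n" and sub: "\<forall>Y\<in>set \<pi>. Y \<subseteq> {0..<n}" and fr: "fully_ranked n (set \<pi>)"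
    unfolding is_lin_trans_def by auto
  obtain S where S: "S \<subseteq> set \<pi>" "xor_lc S = {m}" using fr m unfolding fully_ranked_def by blast
  have fin: "finite S" using S(1) finite_subset by blast
  have lc: "lc_val n Y i = lc_val n Y j" if Y: "Y \<in> set \<pi>" for Y
  proof -
    obtain k where k: "k < n" "\<pi> ! k = Y" using Y len by (auto simp: in_set_conv_nth)
    show ?thesis using lt_perm_bits[OF k(1), of \<pi> i] lt_perm_bits[OF k(1), of \<pi> j] eq k by metis
  qed
  have "{Y\<in>S. lc_val n Y i} = {Y\<in>S. lc_val n Y j}" using lc S(1) by auto
  then show "var_val n i m = var_val n j m"
    using xor_parity[OF fin _ S(2) m, of i] xor_parity[OF fin _ S(2) m, of j] sub S(1) by auto
qed

lemma lt_perm_bij: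
  assumes "is_lin_trans n \<pi>"
  shows "bij_betw (lt_perm n \<pi>) {0..<2^n} {0..<2^n}"
proof -
  have inj: "inj_on (lt_perm n \<pi>) {0..<2^n}"
    using lt_perm_inj[OF assms] by (auto intro: inj_onI)
  have "lt_perm n \<pi> ` {0..<2^n} \<subseteq> {0..<2^n}" using lt_perm_less by auto
  moreover have "card (lt_perm n \<pi> ` {0..<2^n}) = card {0..<(2::nat)^n}"
    using inj by (simp add: card_image)
  ultimately have "lt_perm n \<pi> ` {0..<2^n} = {0..<2^n}"
    by (simp add: card_subset_eq)
  then show ?thesis using inj by (simp add: bij_betw_def)
qed

declare nsem.simps[simp del]

lemma arith_l3:
  assumes "(X::nat) < 2^p" "(B::nat) \<le> 1" "(s::nat) < 2^e"
  shows "(2*X + B) * 2^e + s < 2^(p + Suc e)"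
proof -
  have "(2*X + B) * 2^e + s < (2*X + B + 1) * 2^e" using assms(3) by simp
  also have "\<dots> \<le> (2*X + 2) * 2^e" using assms(2) by (intro mult_right_mono) auto
  also have "\<dots> = (X + 1) * 2^(Suc e)" by simp
  also have "\<dots> \<le> 2^p * 2^(Suc e)" using assms(1) by (intro mult_right_mono) auto
  also have "\<dots> = 2^(p + Suc e)" by (simp add: power_add)
  finally show ?thesis .
qed

lemma setbit:
  assumes r: "r < 2^n" and p: "p < n"
  shows "\<exists>r'. r' < 2^n \<and> var_val n r' p = b \<and> r' mod 2^(n - Suc p) = r mod 2^(n - Suc p)"
proof -
  define e where "e = n - Suc p"
  have n: "n = p + Suc e" using p e_def by simp
  define X where "X = r div 2^(Suc e)"
  define B :: nat where "B = (if b then 1 else 0)"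
  define r' where "r' = (2*X + B) * 2^e + r mod 2^e"
  have X: "X < 2^p" unfolding X_def using r n by (simp add: less_mult_imp_div_less power_add)
  have s: "r mod 2^e < 2^e" by simp
  have d: "r' div 2^e = 2*X + B" and m: "r' mod 2^e = r mod 2^e"
    unfolding r'_def using s by simp_all
  have "r' < 2^n" unfolding r'_def n by (rule arith_l3[OF X _ s]) (simp add: B_def)
  moreover have "var_val n r' p = b"
    unfolding var_val_def using d n by (simp add: B_def)
  moreover have "r' mod 2^(n - Suc p) = r mod 2^(n - Suc p)" using m e_def by simp
  ultimately show ?thesis by blast
qed

definition kk :: "nat \<Rightarrow> nat \<Rightarrow> nat \<Rightarrow> nat \<Rightarrow> nat" where
  "kk n p r c = 2 * (if var_val n r p then 1 else 0) + (if var_val n c p then 1 else 0)"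

lemma kk_less: "kk n p r c < 4" by (simp add: kk_def)

lemma pick:
  assumes "r < 2^n" "c < 2^n" "p < n" "k < (4::nat)"
  shows "\<exists>r' c'. r' < 2^n \<and> c' < 2^n \<and> r' mod 2^(n - Suc p) = r mod 2^(n - Suc p) \<and>
     c' mod 2^(n - Suc p) = c mod 2^(n - Suc p) \<and> kk n p r' c' = k"
proof -
  obtain r' where r': "r' < 2^n" "var_val n r' p = (2 \<le> k)" "r' mod 2^(n - Suc p) = r mod 2^(n - Suc p)"
    using setbit[OF assms(1,3)] by blast
  obtain c' where c': "c' < 2^n" "var_val n c' p = odd k" "c' mod 2^(n - Suc p) = c mod 2^(n - Suc p)"
    using setbit[OF assms(2,3)] by blast
  have "kk n p r' c' = k" unfolding kk_def r'(2) c'(2) using assms(4)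
    by (cases k; cases "k - 1"; cases "k - 2"; cases "k - 3"; auto)
  then show ?thesis using r' c' by blast
qed

lemma var_val_mod:
  assumes "r mod 2^(n - j) = r' mod 2^(n - j)" "j \<le> i" "i < n"
  shows "var_val n r i = var_val n r' i"
proof -
  have "bit (take_bit (n - j) r) (n - 1 - i) = bit (take_bit (n - j) r') (n - 1 - i)"
    using assms(1) by (simp add: take_bit_eq_mod)
  moreover have "n - 1 - i < n - j" using assms(2,3) by simp
  ultimately have "bit r (n - 1 - i) = bit r' (n - 1 - i)" by (simp add: bit_take_bit_iff)
  then show ?thesis using assms(3) by (simp add: var_val_bit)
qed

lemma mod_mod_pow: "e' \<le> e \<Longrightarrow> (r::nat) mod 2^e mod 2^e' = r mod 2^e'"
  by (simp add: le_imp_power_dvd mod_mod_cancel)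

lemma nsem_at_node:
  assumes "\<not> n \<le> j" "v \<in> inodes Q \<and> ind Q v = j"
  shows "nsem n Q v j r c = wt Q v (kk n j r c) * nsem n Q (succ Q v (kk n j r c)) (Suc j) r c"
proof -
  have "nsem n Q v j r c = (let k = 2 * (if var_val n r j then 1 else 0) + (if var_val n c j then 1 else 0)
         in wt Q v k * nsem n Q (succ Q v k) (Suc j) r c)"
    by (subst nsem.simps) (simp only: assms if_False if_True simp_thms)
  then show ?thesis by (simp add: kk_def Let_def)
qed

lemma nsem_skip1: "\<not> (v \<in> inodes Q \<and> ind Q v = j) \<Longrightarrow> \<not> n \<le> j \<Longrightarrow> nsem n Q v j r c = nsem n Q v (Suc j) r c"
  by (subst nsem.simps) (simp only: if_False)

lemma nsem_local:
  "r mod 2^(n - j) = r' mod 2^(n - j) \<Longrightarrow> c mod 2^(n - j) = c' mod 2^(n - j) \<Longrightarrow>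
   nsem n Q v j r c = nsem n Q v j r' c'"
proof (induction n Q v j r c arbitrary: r' c' rule: nsem.induct)
  case (1 n Q v j r c)
  show ?case
  proof (cases "n \<le> j")
    case True then show ?thesis by (subst (1 2) nsem.simps) simp
  next
    case False
    have m1: "r mod 2^(n - Suc j) = r' mod 2^(n - Suc j)"
      using "1.prems"(1) mod_mod_pow[of "n - Suc j" "n - j" r] mod_mod_pow[of "n - Suc j" "n - j" r'] by simp
    have m2: "c mod 2^(n - Suc j) = c' mod 2^(n - Suc j)"
      using "1.prems"(2) mod_mod_pow[of "n - Suc j" "n - j" c] mod_mod_pow[of "n - Suc j" "n - j" c'] by simp
    have vr: "var_val n r j = var_val n r' j" using var_val_mod[OF "1.prems"(1)] False by simp
    have vc: "var_val n c j = var_val n c' j" using var_val_mod[OF "1.prems"(2)] False by simp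
    show ?thesis
    proof (cases "v \<in> inodes Q \<and> ind Q v = j")
      case True
      have kk: "kk n j r c = kk n j r' c'" using vr vc by (simp add: kk_def)
      show ?thesis using "1.IH"(1)[OF False True refl m1 m2]
        unfolding nsem_at_node[OF False True] kk_def vr vc by simp
    next
      case F2: False
      show ?thesis using "1.IH"(2)[OF False F2 m1 m2]
        unfolding nsem_skip1[OF F2 False] by simp
    qed
  qed
qed

lemma nsem_out: "v \<notin> inodes Q \<Longrightarrow> nsem n Q v j r c = 1"
proof (induction n Q v j r c rule: nsem.induct)
  case (1 n Q v j r c)
  then show ?case by (subst nsem.simps) simp
qed


lemma nsem_skip_in:
  assumes "v \<in> inodes Q" "j \<le> ind Q v"
  shows "nsem n Q v j r c = nsem n Q v (ind Q v) r c"
  using assms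
proof (induction "ind Q v - j" arbitrary: j)
  case 0 then show ?case by simp
next
  case (Suc d)
  then have j: "j < ind Q v" by simp
  show ?case
  proof (cases "j < n")
    case True
    then have "nsem n Q v j r c = nsem n Q v (Suc j) r c" using j by (intro nsem_skip1) auto
    also have "\<dots> = nsem n Q v (ind Q v) r c" using Suc j by (intro Suc.hyps) auto
    finally show ?thesis .
  next
    case False
    then show ?thesis using j by (subst (1 2) nsem.simps) simp
  qed
qed

definition nind' :: "nat \<Rightarrow> qmdd \<Rightarrow> nat \<Rightarrow> nat" where "nind' = nind"

lemma nsem_skip:
  assumes "j \<le> j'" "j' \<le> nind n Q v"
  shows "nsem n Q v j r c = nsem n Q v j' r c"
proof (cases "v \<in> inodes Q")
  case True
  then have "ind Q v = nind n Q v" by (simp add: nind_def)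
  then show ?thesis using nsem_skip_in[OF True, of j] nsem_skip_in[OF True, of j'] assms by simp
next
  case False
  then show ?thesis by (simp add: nsem_out)
qed

lemma nsem_node:
  assumes "v \<in> inodes Q" "ind Q v = p" "p < n"
  shows "nsem n Q v p r c = wt Q v (kk n p r c) * nsem n Q (succ Q v (kk n p r c)) (Suc p) r c"
  using nsem_at_node[of n p v Q r c] assms by simp

definition wfq :: "nat \<Rightarrow> qmdd \<Rightarrow> bool" where
  "wfq n Q \<longleftrightarrow> finite (inodes Q) \<and> tnode Q \<notin> inodes Q \<and> root Q \<in> all_nodes Q \<and>
     (\<forall>v \<in> inodes Q. ind Q v < n) \<and>
     (\<forall>v \<in> inodes Q. \<forall>k<4. succ Q v k \<in> all_nodes Q \<and> ind Q v < nind n Q (succ Q v k))"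

definition valid :: "nat \<Rightarrow> qmdd \<Rightarrow> bool" where
  "valid n Q \<longleftrightarrow> wfq n Q \<and> reduced Q \<and> normalized Q"

lemma is_qmdd_wfq: "is_qmdd n Q \<Longrightarrow> wfq n Q"
  unfolding is_qmdd_def wfq_def by blast

lemma wfq_succ: "wfq n Q \<Longrightarrow> v \<in> inodes Q \<Longrightarrow> k < 4 \<Longrightarrow> succ Q v k \<in> all_nodes Q \<and> ind Q v < nind n Q (succ Q v k)"
  unfolding wfq_def by blast

lemma wfq_ind: "wfq n Q \<Longrightarrow> v \<in> inodes Q \<Longrightarrow> ind Q v < n"
  unfolding wfq_def by blast

lemma nind_in: "v \<in> inodes Q \<Longrightarrow> nind n Q v = ind Q v"
  by (simp add: nind_def)

lemma nind_out: "v \<notin> inodes Q \<Longrightarrow> nind n Q v = n"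
  by (simp add: nind_def)

lemma nind_le: "wfq n Q \<Longrightarrow> nind n Q v \<le> n"
  unfolding nind_def wfq_def by (auto simp: less_imp_le)

lemma all_nodes_cases: "v \<in> all_nodes Q \<Longrightarrow> v \<notin> inodes Q \<Longrightarrow> v = tnode Q"
  by (simp add: all_nodes_def)

lemma NZ:
  assumes "wfq n Q" "normalized Q" "v \<in> all_nodes Q" "j \<le> nind n Q v"
  shows "\<exists>r c. r < 2^n \<and> c < 2^n \<and> nsem n Q v j r c \<noteq> 0"
  using assms(3,4)
proof (induction "n - nind n Q v" arbitrary: v j rule: less_induct)
  case less
  show ?case
  proof (cases "v \<in> inodes Q")
    case False
    then show ?thesis by (intro exI[of _ 0]) (simp add: nsem_out)
  next
    case True
    define p where "p = ind Q v"
    have p: "p < n" using wfq_ind[OF assms(1) True] p_def by simp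
    obtain k where k: "k < 4" "wt Q v k = 1" using assms(2) True unfolding normalized_def by blast
    define s where "s = succ Q v k"
    have s: "s \<in> all_nodes Q" "p < nind n Q s" using wfq_succ[OF assms(1) True k(1)] s_def p_def by auto
    have "n - nind n Q s < n - nind n Q v" using s p True nind_le[OF assms(1), of s] by (simp add: nind_in p_def)
    then obtain r0 c0 where rc0: "r0 < 2^n" "c0 < 2^n" "nsem n Q s (Suc p) r0 c0 \<noteq> 0"
      using less.hyps[OF _ s(1), of "Suc p"] s(2) by auto
    obtain r c where rc: "r < 2^n" "c < 2^n" "r mod 2^(n - Suc p) = r0 mod 2^(n - Suc p)"
      "c mod 2^(n - Suc p) = c0 mod 2^(n - Suc p)" "kk n p r c = k"
      using pick[OF rc0(1,2) p k(1)] by blast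
    have "nsem n Q v j r c = nsem n Q v p r c"
      using nsem_skip[of j p n Q v] less.prems True by (simp add: nind_in p_def)
    also have "\<dots> = wt Q v k * nsem n Q s (Suc p) r c"
      using nsem_node[OF True p_def[symmetric] p] rc(5) s_def by simp
    also have "\<dots> = nsem n Q s (Suc p) r0 c0"
      using k(2) nsem_local[OF rc(3,4)] by simp
    finally have "nsem n Q v j r c \<noteq> 0" using rc0 by simp
    with rc show ?thesis by blast
  qed
qed

lemma NZ_all:
  assumes "wfq n Q" "normalized Q" "v \<in> all_nodes Q" "j \<le> nind n Q v" "z \<noteq> 0"
    and "\<forall>r c. r < 2^n \<longrightarrow> c < 2^n \<longrightarrow> z * nsem n Q v j r c = 0"
  shows False
  using NZ[OF assms(1-4)] assms(5,6) by auto

lemma norm_eq: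
  fixes x y :: "nat \<Rightarrow> complex"
  assumes x1: "\<forall>k<4. cmod (x k) \<le> 1" and x2: "\<exists>k<4. cmod (x k) = 1 \<and> x k = 1 \<and> (\<forall>k'<k. cmod (x k') \<noteq> 1)"
    and y1: "\<forall>k<4. cmod (y k) \<le> 1" and y2: "\<exists>k<4. cmod (y k) = 1 \<and> y k = 1 \<and> (\<forall>k'<k. cmod (y k') \<noteq> 1)"
    and e: "\<forall>k<4. a * x k = b * y k" and a: "a \<noteq> 0"
  shows "a = b"
proof -
  obtain k1 where k1: "k1 < 4" "x k1 = 1" "\<forall>k'<k1. cmod (x k') \<noteq> 1" using x2 by blast
  obtain k2 where k2: "k2 < 4" "y k2 = 1" "\<forall>k'<k2. cmod (y k') \<noteq> 1" using y2 by blast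
  have m: "cmod a * cmod (x k) = cmod b * cmod (y k)" if "k < 4" for k
    using e that by (metis norm_mult)
  have "cmod a \<le> cmod b" using m[OF k1(1)] k1(2) y1 k1(1)
    by (metis mult.right_neutral mult_left_le norm_ge_zero norm_one)
  moreover have "cmod b \<le> cmod a" using m[OF k2(1)] k2(2) x1 k2(1)
    by (metis mult.right_neutral mult_left_le norm_ge_zero norm_one)
  ultimately have ab: "cmod a = cmod b" by simp
  have "cmod a > 0" using a by simp
  then have xy: "cmod (x k) = cmod (y k)" if "k < 4" for k using m[OF that] ab by simp
  have "k1 = k2"
  proof (rule ccontr)
    assume "k1 \<noteq> k2"
    then consider "k1 < k2" | "k2 < k1" by linarith
    then show False
    proof cases
      case 1 then show False using k2(3) xy[OF k1(1)] k1(2) by auto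
    next
      case 2 then show False using k1(3) xy[OF k2(1)] k2(2) by auto
    qed
  qed
  then show ?thesis using e k1 k2 by auto
qed

definition CL :: "nat \<Rightarrow> nat \<Rightarrow> bool" where
  "CL n j \<longleftrightarrow> (\<forall>Q1 Q2 u v a b. valid n Q1 \<and> valid n Q2 \<and> u \<in> all_nodes Q1 \<and> v \<in> all_nodes Q2 \<and>
     j \<le> nind n Q1 u \<and> j \<le> nind n Q2 v \<and> a \<noteq> 0 \<and> b \<noteq> 0 \<and>
     (\<forall>r c. r < 2^n \<longrightarrow> c < 2^n \<longrightarrow> a * nsem n Q1 u j r c = b * nsem n Q2 v j r c)
     \<longrightarrow> a = b \<and> nind n Q1 u = nind n Q2 v \<and> (Q1 = Q2 \<longrightarrow> u = v))"

lemma CLD: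
  assumes "CL n j" "valid n Q1" "valid n Q2" "u \<in> all_nodes Q1" "v \<in> all_nodes Q2"
    "j \<le> nind n Q1 u" "j \<le> nind n Q2 v" "a \<noteq> 0" "b \<noteq> 0"
    "\<And>r c. r < 2^n \<Longrightarrow> c < 2^n \<Longrightarrow> a * nsem n Q1 u j r c = b * nsem n Q2 v j r c"
  shows "a = b \<and> nind n Q1 u = nind n Q2 v \<and> (Q1 = Q2 \<longrightarrow> u = v)"
  using assms unfolding CL_def by blast

lemma in_all: "v \<in> inodes Q \<Longrightarrow> v \<in> all_nodes Q"
  by (simp add: all_nodes_def)

lemma node_extract:
  assumes wf: "wfq n Q" and u: "u \<in> inodes Q" "ind Q u = p" and j: "j \<le> p" and k: "k < 4"
    and r: "r < 2^n" and c: "c < 2^n"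
  obtains r' c' where "r' < 2^n" "c' < 2^n"
    "r' mod 2^(n - Suc p) = r mod 2^(n - Suc p)" "c' mod 2^(n - Suc p) = c mod 2^(n - Suc p)"
    "nsem n Q u j r' c' = wt Q u k * nsem n Q (succ Q u k) (Suc p) r c"
proof -
  have p: "p < n" using wfq_ind[OF wf u(1)] u(2) by simp
  obtain r' c' where rc: "r' < 2^n" "c' < 2^n" "r' mod 2^(n - Suc p) = r mod 2^(n - Suc p)"
      "c' mod 2^(n - Suc p) = c mod 2^(n - Suc p)" "kk n p r' c' = k"
    using pick[OF r c p k] by blast
  have "nsem n Q u j r' c' = nsem n Q u p r' c'"
    using nsem_skip_in[OF u(1), of j] u j by simp
  also have "\<dots> = wt Q u k * nsem n Q (succ Q u k) (Suc p) r' c'"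
    using nsem_node[OF u p] rc(5) by simp
  also have "\<dots> = wt Q u k * nsem n Q (succ Q u k) (Suc p) r c"
    using nsem_local[OF rc(3,4)] by simp
  finally show ?thesis using that rc by blast
qed

lemma case_lt:
  assumes IH: "CL n (Suc p)" and V1: "valid n Q1" and V2: "valid n Q2"
    and u: "u \<in> inodes Q1" "ind Q1 u = p" and v: "v \<in> all_nodes Q2" "p < nind n Q2 v"
    and j: "j \<le> p" and a: "a \<noteq> 0" and b: "b \<noteq> 0"
    and eq: "\<forall>r c. r < 2^n \<longrightarrow> c < 2^n \<longrightarrow> a * nsem n Q1 u j r c = b * nsem n Q2 v j r c"
  shows False
proof -
  have wf1: "wfq n Q1" and wf2: "wfq n Q2" using V1 V2 by (auto simp: valid_def)
  have p: "p < n" using wfq_ind[OF wf1 u(1)] u(2) by simp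
  have H: "a * wt Q1 u k * nsem n Q1 (succ Q1 u k) (Suc p) r c = b * nsem n Q2 v (Suc p) r c"
    if k: "k < 4" and r: "r < 2^n" and c: "c < 2^n" for k r c
  proof -
    obtain r' c' where rc: "r' < 2^n" "c' < 2^n"
      "r' mod 2^(n - Suc p) = r mod 2^(n - Suc p)" "c' mod 2^(n - Suc p) = c mod 2^(n - Suc p)"
      "nsem n Q1 u j r' c' = wt Q1 u k * nsem n Q1 (succ Q1 u k) (Suc p) r c"
      using node_extract[OF wf1 u j k r c] by blast
    have "nsem n Q2 v j r' c' = nsem n Q2 v (Suc p) r' c'"
      using nsem_skip[of j "Suc p" n Q2 v] j v(2) by simp
    also have "\<dots> = nsem n Q2 v (Suc p) r c" using nsem_local[OF rc(3,4)] by simp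
    finally show ?thesis using eq[rule_format, OF rc(1,2)] rc(5) by (simp add: mult.assoc)
  qed
  have sk: "succ Q1 u k \<in> all_nodes Q1 \<and> Suc p \<le> nind n Q1 (succ Q1 u k)" if "k < 4" for k
    using wfq_succ[OF wf1 u(1) that] u(2) by auto
  have W: "wt Q1 u k \<noteq> 0" if k: "k < 4" for k
  proof
    assume "wt Q1 u k = 0"
    then have "\<forall>r c. r < 2^n \<longrightarrow> c < 2^n \<longrightarrow> b * nsem n Q2 v (Suc p) r c = 0"
      using H[OF k] by (metis mult_zero_left mult_zero_right)
    moreover have "normalized Q2" using V2 by (simp add: valid_def)
    moreover have "Suc p \<le> nind n Q2 v" using v(2) by simp
    ultimately show False using NZ_all[OF wf2 _ v(1) _ b, of "Suc p"] by blast
  qed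
  have A: "a * wt Q1 u k = b" if k: "k < 4" for k
    using CLD[OF IH V1 V2 sk[OF k, THEN conjunct1] v(1) sk[OF k, THEN conjunct2] _ _ b, of "a * wt Q1 u k"]
      v(2) a W[OF k] H[OF k] by auto
  have S: "succ Q1 u k = succ Q1 u 0" if k: "k < 4" for k
  proof -
    have "a * wt Q1 u k * nsem n Q1 (succ Q1 u k) (Suc p) r c = a * wt Q1 u 0 * nsem n Q1 (succ Q1 u 0) (Suc p) r c"
      if "r < 2^n" "c < 2^n" for r c using H[OF k that] H[of 0, OF _ that] by simp
    then show ?thesis
      using CLD[OF IH V1 V1 sk[OF k, THEN conjunct1] sk[of 0, THEN conjunct1] sk[OF k, THEN conjunct2]
          sk[of 0, THEN conjunct2], of "a * wt Q1 u k" "a * wt Q1 u 0"] a W[OF k] W[of 0] by auto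
  qed
  have "wt Q1 u k = wt Q1 u 0" if k: "k < 4" for k
  proof -
    have "a * wt Q1 u k = a * wt Q1 u 0" using A[OF k] A[of 0] by simp
    then show ?thesis using a by simp
  qed
  then show False using S V1 u(1) unfolding valid_def reduced_def by blast
qed

lemma node_at:
  assumes wf: "wfq n Q" and u: "u \<in> inodes Q" "ind Q u = p" and j: "j \<le> p" and k: "kk n p r c = k"
  shows "nsem n Q u j r c = wt Q u k * nsem n Q (succ Q u k) (Suc p) r c"
proof -
  have p: "p < n" using wfq_ind[OF wf u(1)] u(2) by simp
  have "nsem n Q u j r c = nsem n Q u p r c"
    using nsem_skip_in[OF u(1), of j] u j by simp
  also have "\<dots> = wt Q u k * nsem n Q (succ Q u k) (Suc p) r c"
    using nsem_node[OF u p] k by simp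
  finally show ?thesis .
qed

lemma blocks_rel:
  assumes IH: "CL n (Suc p)" and V1: "valid n Q1" and V2: "valid n Q2"
    and u: "u \<in> inodes Q1" "ind Q1 u = p" and v: "v \<in> inodes Q2" "ind Q2 v = p"
    and j: "j \<le> p" and a: "a \<noteq> 0" and b: "b \<noteq> 0"
    and eq: "\<forall>r c. r < 2^n \<longrightarrow> c < 2^n \<longrightarrow> a * nsem n Q1 u j r c = b * nsem n Q2 v j r c"
    and k: "k < 4"
  shows "a * wt Q1 u k = b * wt Q2 v k \<and> (Q1 = Q2 \<longrightarrow> succ Q1 u k = succ Q2 v k) \<and>
    (wt Q1 u k = 0 \<longrightarrow> wt Q2 v k = 0 \<and> succ Q1 u k = tnode Q1 \<and> succ Q2 v k = tnode Q2) \<and>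
    (wt Q1 u k \<noteq> 0 \<longrightarrow> wt Q2 v k \<noteq> 0 \<and> nind n Q1 (succ Q1 u k) = nind n Q2 (succ Q2 v k) \<and>
       (\<forall>r c. r < 2^n \<longrightarrow> c < 2^n \<longrightarrow> a * wt Q1 u k * nsem n Q1 (succ Q1 u k) (Suc p) r c =
           b * wt Q2 v k * nsem n Q2 (succ Q2 v k) (Suc p) r c))"
proof -
  have wf1: "wfq n Q1" and wf2: "wfq n Q2" and N1: "normalized Q1" and N2: "normalized Q2"
    using V1 V2 by (auto simp: valid_def)
  have p: "p < n" using wfq_ind[OF wf1 u(1)] u(2) by simp
  have H: "a * wt Q1 u k * nsem n Q1 (succ Q1 u k) (Suc p) r c = b * wt Q2 v k * nsem n Q2 (succ Q2 v k) (Suc p) r c"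
    if r: "r < 2^n" and c: "c < 2^n" for r c
  proof -
    obtain r' c' where rc: "r' < 2^n" "c' < 2^n" "r' mod 2^(n - Suc p) = r mod 2^(n - Suc p)"
      "c' mod 2^(n - Suc p) = c mod 2^(n - Suc p)" "kk n p r' c' = k"
      using pick[OF r c p k] by blast
    have "a * wt Q1 u k * nsem n Q1 (succ Q1 u k) (Suc p) r c = a * nsem n Q1 u j r' c'"
      using node_at[OF wf1 u j rc(5)] nsem_local[OF rc(3,4)] by simp
    also have "\<dots> = b * nsem n Q2 v j r' c'" using eq[rule_format, OF rc(1,2)] .
    also have "\<dots> = b * wt Q2 v k * nsem n Q2 (succ Q2 v k) (Suc p) r c"
      using node_at[OF wf2 v j rc(5)] nsem_local[OF rc(3,4)] by simp
    finally show ?thesis .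
  qed
  have s1: "succ Q1 u k \<in> all_nodes Q1" "Suc p \<le> nind n Q1 (succ Q1 u k)"
    using wfq_succ[OF wf1 u(1) k] u(2) by auto
  have s2: "succ Q2 v k \<in> all_nodes Q2" "Suc p \<le> nind n Q2 (succ Q2 v k)"
    using wfq_succ[OF wf2 v(1) k] v(2) by auto
  have z1: "wt Q1 u k = 0 \<longrightarrow> succ Q1 u k = tnode Q1" using N1 u(1) k unfolding normalized_def by blast
  have z2: "wt Q2 v k = 0 \<longrightarrow> succ Q2 v k = tnode Q2" using N2 v(1) k unfolding normalized_def by blast
  show ?thesis
  proof (cases "wt Q1 u k = 0")
    case True
    have "wt Q2 v k = 0"
    proof (rule ccontr)
      assume nz: "wt Q2 v k \<noteq> 0"
      have "\<forall>r c. r < 2^n \<longrightarrow> c < 2^n \<longrightarrow> (b * wt Q2 v k) * nsem n Q2 (succ Q2 v k) (Suc p) r c = 0"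
        using H True by (metis mult_zero_left mult_zero_right)
      then show False using NZ_all[OF wf2 N2 s2(1) s2(2), of "b * wt Q2 v k"] b nz by simp
    qed
    then show ?thesis using True z1 z2 by auto
  next
    case False
    have nz: "wt Q2 v k \<noteq> 0"
    proof
      assume z: "wt Q2 v k = 0"
      have "\<forall>r c. r < 2^n \<longrightarrow> c < 2^n \<longrightarrow> (a * wt Q1 u k) * nsem n Q1 (succ Q1 u k) (Suc p) r c = 0"
        using H z by (metis mult_zero_left mult_zero_right)
      then show False using NZ_all[OF wf1 N1 s1(1) s1(2), of "a * wt Q1 u k"] a False by simp
    qed
    have "a * wt Q1 u k = b * wt Q2 v k \<and> nind n Q1 (succ Q1 u k) = nind n Q2 (succ Q2 v k) \<and>
      (Q1 = Q2 \<longrightarrow> succ Q1 u k = succ Q2 v k)"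
      using CLD[OF IH V1 V2 s1(1) s2(1) s1(2) s2(2), of "a * wt Q1 u k" "b * wt Q2 v k"] H a b False nz by simp
    then show ?thesis using False nz H by simp
  qed
qed

lemma norm_parts:
  assumes "normalized Q" "v \<in> inodes Q"
  shows "\<forall>k<4. cmod (wt Q v k) \<le> 1" "\<exists>k<4. cmod (wt Q v k) = 1 \<and> wt Q v k = 1 \<and> (\<forall>k'<k. cmod (wt Q v k') \<noteq> 1)"
  using assms unfolding normalized_def by blast+

lemma case_same:
  assumes IH: "CL n (Suc p)" and V1: "valid n Q1" and V2: "valid n Q2"
    and u: "u \<in> inodes Q1" "ind Q1 u = p" and v: "v \<in> inodes Q2" "ind Q2 v = p"
    and j: "j \<le> p" and a: "a \<noteq> 0" and b: "b \<noteq> 0"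
    and eq: "\<forall>r c. r < 2^n \<longrightarrow> c < 2^n \<longrightarrow> a * nsem n Q1 u j r c = b * nsem n Q2 v j r c"
  shows "a = b \<and> (Q1 = Q2 \<longrightarrow> u = v)"
proof -
  note BR = blocks_rel[OF IH V1 V2 u v j a b eq]
  have N1: "normalized Q1" and N2: "normalized Q2" using V1 V2 by (auto simp: valid_def)
  have W: "\<forall>k<4. a * wt Q1 u k = b * wt Q2 v k" using BR by blast
  have ab: "a = b"
    by (rule norm_eq[OF norm_parts[OF N1 u(1)] norm_parts[OF N2 v(1)] W a])
  moreover have "Q1 = Q2 \<longrightarrow> u = v"
  proof
    assume QQ: "Q1 = Q2"
    have "\<forall>k<4. succ Q1 u k = succ Q1 v k \<and> wt Q1 u k = wt Q1 v k"
    proof (intro allI impI)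
      fix k :: nat assume k: "k < 4"
      have s: "succ Q1 u k = succ Q2 v k" using BR[OF k] QQ by blast
      have w: "a * wt Q1 u k = a * wt Q2 v k" using BR[OF k] ab by blast
      show "succ Q1 u k = succ Q1 v k \<and> wt Q1 u k = wt Q1 v k" using s w a QQ by simp
    qed
    then have "iso_nodes Q1 u v"
      unfolding iso_nodes_def using u(2) v(2) QQ by simp
    then show "u = v" using V1 u(1) v(1) QQ unfolding valid_def reduced_def by blast
  qed
  ultimately show ?thesis by blast
qed

lemma CL_step:
  assumes IH: "\<And>j'. j < j' \<Longrightarrow> j' \<le> n \<Longrightarrow> CL n j'"
  shows "CL n j"
  unfolding CL_def
proof (intro allI impI, elim conjE)
  fix Q1 Q2 u v a b
  assume V1: "valid n Q1" and V2: "valid n Q2" and u: "u \<in> all_nodes Q1" and v: "v \<in> all_nodes Q2"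
    and ju: "j \<le> nind n Q1 u" and jv: "j \<le> nind n Q2 v" and a: "a \<noteq> 0" and b: "b \<noteq> 0"
    and eq0: "\<forall>r c. r < 2^n \<longrightarrow> c < 2^n \<longrightarrow> a * nsem n Q1 u j r c = b * nsem n Q2 v j r c"
  note eq = eq0
  have eq': "\<forall>r c. r < 2^n \<longrightarrow> c < 2^n \<longrightarrow> b * nsem n Q2 v j r c = a * nsem n Q1 u j r c"
    using eq0 by metis
  have wf1: "wfq n Q1" and wf2: "wfq n Q2" using V1 V2 by (auto simp: valid_def)
  show "a = b \<and> nind n Q1 u = nind n Q2 v \<and> (Q1 = Q2 \<longrightarrow> u = v)"
  proof (cases "u \<in> inodes Q1")
    case ui: True
    define p where "p = ind Q1 u"
    have p: "p < n" using wfq_ind[OF wf1 ui] p_def by simp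
    have jp: "j \<le> p" using ju ui by (simp add: nind_in p_def)
    have IHp: "CL n (Suc p)" using IH jp p by simp
    show ?thesis
    proof (cases "v \<in> inodes Q2")
      case vi: True
      define q where "q = ind Q2 v"
      have q: "q < n" using wfq_ind[OF wf2 vi] q_def by simp
      have jq: "j \<le> q" using jv vi by (simp add: nind_in q_def)
      have IHq: "CL n (Suc q)" using IH jq q by simp
      consider "p < q" | "q < p" | "p = q" by linarith
      then show ?thesis
      proof cases
        case 1
        have False using case_lt[OF IHp V1 V2 ui p_def[symmetric] v _ jp a b eq] 1 vi by (simp add: nind_in q_def)
        then show ?thesis ..
      next
        case 2
        have False using case_lt[OF IHq V2 V1 vi q_def[symmetric] u _ jq b a eq'] 2 ui by (simp add: nind_in p_def)
        then show ?thesis ..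
      next
        case 3
        then show ?thesis using case_same[OF IHp V1 V2 ui p_def[symmetric] vi _ jp a b eq] ui vi
          by (simp add: nind_in p_def q_def)
      qed
    next
      case vo: False
      have False using case_lt[OF IHp V1 V2 ui p_def[symmetric] v _ jp a b eq] vo p by (simp add: nind_out)
      then show ?thesis ..
    qed
  next
    case uo: False
    show ?thesis
    proof (cases "v \<in> inodes Q2")
      case vi: True
      define q where "q = ind Q2 v"
      have q: "q < n" using wfq_ind[OF wf2 vi] q_def by simp
      have jq: "j \<le> q" using jv vi by (simp add: nind_in q_def)
      have IHq: "CL n (Suc q)" using IH jq q by simp
      have False using case_lt[OF IHq V2 V1 vi q_def[symmetric] u _ jq b a eq'] uo q by (simp add: nind_out)
      then show ?thesis ..
    next
      case vo: False
      have "a = b" using eq[rule_format, of 0 0] uo vo by (simp add: nsem_out)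
      moreover have "Q1 = Q2 \<longrightarrow> u = v" using all_nodes_cases[OF u uo] all_nodes_cases[OF v vo] by simp
      ultimately show ?thesis using uo vo by (simp add: nind_out)
    qed
  qed
qed

lemma CL_all: "CL n j"
proof (induction "n - j" arbitrary: j rule: less_induct)
  case less
  show ?case by (rule CL_step) (use less in auto)
qed

definition Rl :: "nat \<Rightarrow> qmdd \<Rightarrow> qmdd \<Rightarrow> nat \<Rightarrow> nat \<Rightarrow> bool" where
  "Rl n Q1 Q2 u v \<longleftrightarrow> u \<in> all_nodes Q1 \<and> v \<in> all_nodes Q2 \<and> nind n Q1 u = nind n Q2 v \<and>
     (\<forall>r c. r < 2^n \<longrightarrow> c < 2^n \<longrightarrow> nsem n Q1 u (nind n Q1 u) r c = nsem n Q2 v (nind n Q2 v) r c)"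

lemma R_sym: "Rl n Q1 Q2 u v \<Longrightarrow> Rl n Q2 Q1 v u"
  unfolding Rl_def by metis

lemma R_fun:
  assumes V2: "valid n Q2" and R1: "Rl n Q1 Q2 u v" and R2: "Rl n Q1 Q2 u v'"
  shows "v = v'"
proof -
  have v: "v \<in> all_nodes Q2" "v' \<in> all_nodes Q2" and nn: "nind n Q2 v = nind n Q2 v'"
    using R1 R2 unfolding Rl_def by auto
  have "\<forall>r c. r < 2^n \<longrightarrow> c < 2^n \<longrightarrow> 1 * nsem n Q2 v (nind n Q2 v) r c = 1 * nsem n Q2 v' (nind n Q2 v) r c"
    using R1 R2 nn unfolding Rl_def by auto
  then show ?thesis using CLD[OF CL_all V2 V2 v(1) v(2), of "nind n Q2 v" 1 1] nn by auto
qed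

lemma R_inj:
  assumes V1: "valid n Q1" and R1: "Rl n Q1 Q2 u v" and R2: "Rl n Q1 Q2 u' v"
  shows "u = u'"
  using R_fun[OF V1 R_sym[OF R1] R_sym[OF R2]] .

lemma tnode_all: "tnode Q \<in> all_nodes Q" by (simp add: all_nodes_def)

lemma R_tnode:
  assumes "valid n Q1" "valid n Q2"
  shows "Rl n Q1 Q2 (tnode Q1) (tnode Q2)"
proof -
  have "tnode Q1 \<notin> inodes Q1" "tnode Q2 \<notin> inodes Q2" using assms by (auto simp: valid_def wfq_def)
  then show ?thesis unfolding Rl_def by (simp add: tnode_all nind_out nsem_out)
qed

lemma R_succ:
  assumes V1: "valid n Q1" and V2: "valid n Q2" and R: "Rl n Q1 Q2 u v" and u: "u \<in> inodes Q1" and k: "k < 4"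
  shows "v \<in> inodes Q2 \<and> ind Q2 v = ind Q1 u \<and> wt Q2 v k = wt Q1 u k \<and> Rl n Q1 Q2 (succ Q1 u k) (succ Q2 v k)"
proof -
  have wf1: "wfq n Q1" and wf2: "wfq n Q2" using V1 V2 by (auto simp: valid_def)
  define p where "p = ind Q1 u"
  have p: "p < n" using wfq_ind[OF wf1 u] p_def by simp
  have nn: "nind n Q2 v = p" using R u unfolding Rl_def by (simp add: nind_in p_def)
  have vi: "v \<in> inodes Q2" using nn p by (metis nind_out less_irrefl)
  have vp: "ind Q2 v = p" using nn vi by (simp add: nind_in)
  have eq: "\<forall>r c. r < 2^n \<longrightarrow> c < 2^n \<longrightarrow> 1 * nsem n Q1 u p r c = 1 * nsem n Q2 v p r c"
    using R u nn unfolding Rl_def by (simp add: nind_in p_def)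
  note BR = blocks_rel[OF CL_all V1 V2 u p_def[symmetric] vi vp order_refl one_neq_zero one_neq_zero eq k]
  have b1: "1 * wt Q1 u k = 1 * wt Q2 v k" using BR by blast
  have b3: "wt Q1 u k = 0 \<longrightarrow> succ Q1 u k = tnode Q1 \<and> succ Q2 v k = tnode Q2" using BR by blast
  have b4: "wt Q1 u k \<noteq> 0 \<longrightarrow> nind n Q1 (succ Q1 u k) = nind n Q2 (succ Q2 v k) \<and>
       (\<forall>r c. r < 2^n \<longrightarrow> c < 2^n \<longrightarrow> 1 * wt Q1 u k * nsem n Q1 (succ Q1 u k) (Suc p) r c =
           1 * wt Q2 v k * nsem n Q2 (succ Q2 v k) (Suc p) r c)" using BR by blast
  have w: "wt Q2 v k = wt Q1 u k" using b1 by simp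
  have "Rl n Q1 Q2 (succ Q1 u k) (succ Q2 v k)"
  proof (cases "wt Q1 u k = 0")
    case True
    then show ?thesis using b3 R_tnode[OF V1 V2] by simp
  next
    case False
    have s1: "succ Q1 u k \<in> all_nodes Q1" "Suc p \<le> nind n Q1 (succ Q1 u k)"
      using wfq_succ[OF wf1 u k] p_def by auto
    have s2: "succ Q2 v k \<in> all_nodes Q2" "Suc p \<le> nind n Q2 (succ Q2 v k)"
      using wfq_succ[OF wf2 vi k] vp by auto
    have ne: "nind n Q1 (succ Q1 u k) = nind n Q2 (succ Q2 v k)" using b4 False by blast
    have "nsem n Q1 (succ Q1 u k) (nind n Q1 (succ Q1 u k)) r c = nsem n Q2 (succ Q2 v k) (nind n Q2 (succ Q2 v k)) r c"
      if "r < 2^n" "c < 2^n" for r c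
    proof -
      have "wt Q1 u k * nsem n Q1 (succ Q1 u k) (Suc p) r c = wt Q1 u k * nsem n Q2 (succ Q2 v k) (Suc p) r c"
        using b4 False that w by simp
      then have "nsem n Q1 (succ Q1 u k) (Suc p) r c = nsem n Q2 (succ Q2 v k) (Suc p) r c"
        using False by simp
      then show ?thesis using nsem_skip[OF s1(2) order_refl] nsem_skip[OF s2(2) order_refl] by simp
    qed
    then show ?thesis unfolding Rl_def using s1(1) s2(1) ne by blast
  qed
  then show ?thesis using vi vp w p_def by simp
qed

lemma R_root:
  assumes V1: "valid n Q1" and V2: "valid n Q2" and w1: "root_wt Q1 \<noteq> 0" and w2: "root_wt Q2 \<noteq> 0"
    and eq: "\<forall>r c. r < 2^n \<longrightarrow> c < 2^n \<longrightarrow> qmdd_mat n Q1 r c = qmdd_mat n Q2 r c"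
  shows "Rl n Q1 Q2 (root Q1) (root Q2) \<and> root_wt Q1 = root_wt Q2"
proof -
  have r1: "root Q1 \<in> all_nodes Q1" and r2: "root Q2 \<in> all_nodes Q2" using V1 V2 by (auto simp: valid_def wfq_def)
  have "\<forall>r c. r < 2^n \<longrightarrow> c < 2^n \<longrightarrow> root_wt Q1 * nsem n Q1 (root Q1) 0 r c = root_wt Q2 * nsem n Q2 (root Q2) 0 r c"
    using eq unfolding qmdd_mat_def by simp
  then have C: "root_wt Q1 = root_wt Q2" "nind n Q1 (root Q1) = nind n Q2 (root Q2)"
    using CLD[OF CL_all V1 V2 r1 r2, of 0 "root_wt Q1" "root_wt Q2"] w1 w2 by auto
  have "nsem n Q1 (root Q1) (nind n Q1 (root Q1)) r c = nsem n Q2 (root Q2) (nind n Q2 (root Q2)) r c"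
    if "r < 2^n" "c < 2^n" for r c
  proof -
    have "root_wt Q1 * nsem n Q1 (root Q1) 0 r c = root_wt Q1 * nsem n Q2 (root Q2) 0 r c"
      using eq that C unfolding qmdd_mat_def by simp
    then have "nsem n Q1 (root Q1) 0 r c = nsem n Q2 (root Q2) 0 r c" using w1 by simp
    then show ?thesis using nsem_skip[of 0 "nind n Q1 (root Q1)" n Q1 "root Q1" r c]
        nsem_skip[of 0 "nind n Q2 (root Q2)" n Q2 "root Q2" r c] by simp
  qed
  then show ?thesis unfolding Rl_def using r1 r2 C by blast
qed

lemma R_exists:
  assumes V1: "valid n Q1" and V2: "valid n Q2" and R0: "Rl n Q1 Q2 (root Q1) (root Q2)"
    and reach: "(root Q1, u) \<in> (edge_rel Q1)\<^sup>*"
  shows "\<exists>v. Rl n Q1 Q2 u v"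
  using reach
proof (induction rule: rtrancl_induct)
  case base then show ?case using R0 by blast
next
  case (step y z)
  then obtain v where v: "Rl n Q1 Q2 y v" by blast
  from step(2) obtain k where k: "y \<in> inodes Q1" "k < 4" "z = succ Q1 y k"
    unfolding edge_rel_def by blast
  show ?case using R_succ[OF V1 V2 v k(1,2)] k(3) by blast
qed

lemma unique_iso:
  assumes q1: "is_qmdd n Q1" "reduced Q1" "normalized Q1"
    and q2: "is_qmdd n Q2" "reduced Q2" "normalized Q2"
    and w1: "root_wt Q1 \<noteq> 0" and w2: "root_wt Q2 \<noteq> 0"
    and eq: "\<forall>r c. r < 2^n \<longrightarrow> c < 2^n \<longrightarrow> qmdd_mat n Q1 r c = qmdd_mat n Q2 r c"
  shows "qmdd_iso Q1 Q2"
proof -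
  have V1: "valid n Q1" and V2: "valid n Q2" using q1 q2 by (auto simp: valid_def is_qmdd_wfq)
  have reach1: "\<forall>v\<in>all_nodes Q1. (root Q1, v) \<in> (edge_rel Q1)\<^sup>*" using q1 by (simp add: is_qmdd_def)
  have reach2: "\<forall>v\<in>all_nodes Q2. (root Q2, v) \<in> (edge_rel Q2)\<^sup>*" using q2 by (simp add: is_qmdd_def)
  have R0: "Rl n Q1 Q2 (root Q1) (root Q2)" and rw: "root_wt Q1 = root_wt Q2"
    using R_root[OF V1 V2 w1 w2 eq] by auto
  have ex1: "\<exists>v. Rl n Q1 Q2 u v" if "u \<in> all_nodes Q1" for u
    using R_exists[OF V1 V2 R0] reach1 that by blast
  have ex2: "\<exists>u. Rl n Q1 Q2 u v" if "v \<in> all_nodes Q2" for v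
    using R_exists[OF V2 V1 R_sym[OF R0]] reach2 that R_sym by blast
  define f where "f = (\<lambda>u. SOME v. Rl n Q1 Q2 u v)"
  have fR: "Rl n Q1 Q2 u (f u)" if "u \<in> all_nodes Q1" for u
    unfolding f_def using ex1[OF that] by (rule someI_ex)
  have fv: "f u = v" if "Rl n Q1 Q2 u v" for u v
  proof -
    have "u \<in> all_nodes Q1" using that by (simp add: Rl_def)
    then show ?thesis using R_fun[OF V2 fR that] by simp
  qed
  have inj: "inj_on f (all_nodes Q1)"
  proof (rule inj_onI)
    fix u u' assume u: "u \<in> all_nodes Q1" "u' \<in> all_nodes Q1" "f u = f u'"
    show "u = u'" using R_inj[OF V1 fR[OF u(1)]] fR[OF u(2)] u(3) by simp
  qed
  have img: "f ` all_nodes Q1 = all_nodes Q2"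
  proof
    show "f ` all_nodes Q1 \<subseteq> all_nodes Q2" using fR by (auto simp: Rl_def)
  next
    show "all_nodes Q2 \<subseteq> f ` all_nodes Q1"
    proof
      fix v assume v: "v \<in> all_nodes Q2"
      obtain u where u: "Rl n Q1 Q2 u v" using ex2[OF v] by blast
      then have "u \<in> all_nodes Q1" by (simp add: Rl_def)
      then show "v \<in> f ` all_nodes Q1" using fv[OF u] by blast
    qed
  qed
  have ft: "f (tnode Q1) = tnode Q2" using fv[OF R_tnode[OF V1 V2]] .
  have t2: "tnode Q2 \<notin> inodes Q2" using q2 by (simp add: is_qmdd_def)
  have inodes_img: "f ` inodes Q1 = inodes Q2"
  proof
    show "f ` inodes Q1 \<subseteq> inodes Q2"
    proof
      fix v assume "v \<in> f ` inodes Q1"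
      then obtain u where u: "u \<in> inodes Q1" "v = f u" by blast
      show "v \<in> inodes Q2" using R_succ[OF V1 V2 fR[OF in_all[OF u(1)]] u(1), of 0] u(2) by simp
    qed
  next
    show "inodes Q2 \<subseteq> f ` inodes Q1"
    proof
      fix v assume v: "v \<in> inodes Q2"
      obtain u where u: "Rl n Q1 Q2 u v" using ex2[OF in_all[OF v]] by blast
      have ua: "u \<in> all_nodes Q1" using u by (simp add: Rl_def)
      have "u \<in> inodes Q1"
      proof (rule ccontr)
        assume "u \<notin> inodes Q1"
        then have "u = tnode Q1" using all_nodes_cases[OF ua] by simp
        then have "v = tnode Q2" using fv[OF u] ft by simp
        then show False using v t2 by simp
      qed
      then show "v \<in> f ` inodes Q1" using fv[OF u] by blast
    qed
  qed
  have fr: "f (root Q1) = root Q2" using fv[OF R0] .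
  have nodes: "ind Q2 (f v) = ind Q1 v \<and> (\<forall>k<4. succ Q2 (f v) k = f (succ Q1 v k) \<and> wt Q2 (f v) k = wt Q1 v k)"
    if v: "v \<in> inodes Q1" for v
  proof -
    have R: "Rl n Q1 Q2 v (f v)" using fR[OF in_all[OF v]] .
    have "ind Q2 (f v) = ind Q1 v" using R_succ[OF V1 V2 R v, of 0] by simp
    moreover have "succ Q2 (f v) k = f (succ Q1 v k) \<and> wt Q2 (f v) k = wt Q1 v k" if k: "k < 4" for k
      using R_succ[OF V1 V2 R v k] fv by metis
    ultimately show ?thesis by blast
  qed
  show ?thesis unfolding qmdd_iso_def
    using inj img ft inodes_img fr rw nodes by (intro exI[of _ f]) (simp add: bij_betw_def)
qed

definition blk :: "nat \<Rightarrow> nat \<Rightarrow> cmatrix \<Rightarrow> cmatrix" where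
  "blk m k A = (\<lambda>r c. if r < 2^m \<and> c < 2^m then A ((k div 2) * 2^m + r) ((k mod 2) * 2^m + c) else 0)"

definition allsame :: "nat \<Rightarrow> cmatrix \<Rightarrow> bool" where
  "allsame m A \<longleftrightarrow> (\<forall>k<4. blk m k A = blk m 0 A)"

definition fidx :: "(nat \<Rightarrow> complex) \<Rightarrow> nat" where
  "fidx x = (LEAST k. k < 4 \<and> (\<forall>k'<4. cmod (x k') \<le> cmod (x k)))"

definition fmax :: "(nat \<Rightarrow> complex) \<Rightarrow> complex" where
  "fmax x = x (fidx x)"

fun wgt :: "nat \<Rightarrow> cmatrix \<Rightarrow> complex" where
  "wgt 0 A = A 0 0"
| "wgt (Suc m) A = (if allsame m A then wgt m (blk m 0 A) else fmax (\<lambda>k. wgt m (blk m k A)))"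

fun core :: "nat \<Rightarrow> cmatrix \<Rightarrow> nat \<times> cmatrix" where
  "core 0 A = (0, A)"
| "core (Suc m) A = (if allsame m A then core m (blk m 0 A) else (Suc m, A))"

definition sc :: "complex \<Rightarrow> cmatrix \<Rightarrow> cmatrix" where
  "sc z A = (\<lambda>r c. z * A r c)"

definition canon :: "nat \<Rightarrow> cmatrix \<Rightarrow> nat \<times> cmatrix" where
  "canon m A = (fst (core m A), sc (1 / wgt m A) (snd (core m A)))"

definition zo :: "nat \<Rightarrow> cmatrix \<Rightarrow> bool" where
  "zo m A \<longleftrightarrow> (\<forall>r c. \<not> (r < 2^m \<and> c < 2^m) \<longrightarrow> A r c = 0)"

definition sub :: "nat \<Rightarrow> nat \<Rightarrow> nat \<Rightarrow> cmatrix \<Rightarrow> cmatrix" where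
  "sub m x y U = (\<lambda>r c. if r < 2^m \<and> c < 2^m then U (x * 2^m + r) (y * 2^m + c) else 0)"

lemma blk_sub:
  assumes k: "k < 4"
  shows "blk m k (sub (Suc m) x y U) = sub m (2 * x + k div 2) (2 * y + k mod 2) U"
proof (intro ext)
  fix r c
  have kd: "k div 2 \<le> 1" "k mod 2 \<le> 1" using k by auto
  show "blk m k (sub (Suc m) x y U) r c = sub m (2 * x + k div 2) (2 * y + k mod 2) U r c"
  proof (cases "r < 2 ^ m \<and> c < 2 ^ m")
    case True
    have b1: "k div 2 * 2 ^ m + r < 2 ^ Suc m"
    proof -
      have "k div 2 * 2 ^ m \<le> 1 * 2^m" using kd by (intro mult_right_mono) auto
      then show ?thesis using True by (simp only: power_Suc) linarith
    qed
    have b2: "k mod 2 * 2 ^ m + c < 2 ^ Suc m"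
    proof -
      have "k mod 2 * 2 ^ m \<le> 1 * 2^m" using kd by (intro mult_right_mono) auto
      then show ?thesis using True by (simp only: power_Suc) linarith
    qed
    have e1: "x * 2 ^ Suc m + (k div 2 * 2 ^ m + r) = (2 * x + k div 2) * 2 ^ m + r" by (simp add: algebra_simps)
    have e2: "y * 2 ^ Suc m + (k mod 2 * 2 ^ m + c) = (2 * y + k mod 2) * 2 ^ m + c" by (simp add: algebra_simps)
    have "blk m k (sub (Suc m) x y U) r c = U (x * 2 ^ Suc m + (k div 2 * 2 ^ m + r)) (y * 2 ^ Suc m + (k mod 2 * 2 ^ m + c))"
      unfolding blk_def sub_def using True b1 b2 by (simp only: if_True simp_thms)
    also have "\<dots> = sub m (2 * x + k div 2) (2 * y + k mod 2) U r c"
      unfolding sub_def e1 e2 using True by simp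
    finally show ?thesis .
  next
    case False
    have "blk m k (sub (Suc m) x y U) r c = 0" unfolding blk_def using False by (simp only: if_False)
    moreover have "sub m (2 * x + k div 2) (2 * y + k mod 2) U r c = 0" unfolding sub_def using False by (simp only: if_False)
    ultimately show ?thesis by simp
  qed
qed

lemma zo_blk: "zo m (blk m k A)" unfolding zo_def blk_def by auto
lemma zo_sub: "zo m (sub m x y U)" unfolding zo_def sub_def by auto
lemma zo_sc: "zo m A \<Longrightarrow> zo m (sc z A)" unfolding zo_def sc_def by auto

lemma blk_sc: "blk m k (sc z A) = sc z (blk m k A)"
  unfolding blk_def sc_def by (simp add: fun_eq_iff)

lemma sc_inj: "z \<noteq> 0 \<Longrightarrow> sc z A = sc z B \<longleftrightarrow> A = B"
proof
  assume z: "z \<noteq> 0" and e: "sc z A = sc z B"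
  show "A = B"
  proof (intro ext)
    fix r c
    have "z * A r c = z * B r c" using fun_cong[OF fun_cong[OF e, of r], of c] by (simp add: sc_def)
    then show "A r c = B r c" using z by simp
  qed
qed simp

lemma sc_sc: "sc z (sc w A) = sc (z * w) A" unfolding sc_def by (simp add: mult.assoc)
lemma sc_one: "sc 1 A = A" unfolding sc_def by simp

lemma allsame_sc: "z \<noteq> 0 \<Longrightarrow> allsame m (sc z A) \<longleftrightarrow> allsame m A"
  unfolding allsame_def blk_sc using sc_inj by simp

lemma A_blk:
  assumes "r < 2^(Suc m)" "c < 2^(Suc m)"
  shows "A r c = blk m (2 * (r div 2^m) + c div 2^m) A (r mod 2^m) (c mod 2^m)"
proof -
  have r: "r = (r div 2^m) * 2^m + r mod 2^m" "r div 2^m < 2"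
    using assms(1) by (metis div_mod_decomp less_mult_imp_div_less power_Suc)+
  have c: "c = (c div 2^m) * 2^m + c mod 2^m" "c div 2^m < 2"
    using assms(2) by (metis div_mod_decomp less_mult_imp_div_less power_Suc)+
  have "(2 * (r div 2^m) + c div 2^m) div 2 = r div 2^m" using c(2) by simp
  moreover have "(2 * (r div 2^m) + c div 2^m) mod 2 = c div 2^m" using c(2) by simp
  ultimately show ?thesis unfolding blk_def using r c by simp
qed

lemma fidx_ex: fixes x :: "nat \<Rightarrow> complex" shows "\<exists>k<4. \<forall>k'<4. cmod (x k') \<le> cmod (x k)"
proof -
  let ?S = "(\<lambda>k. cmod (x k)) ` {..<4::nat}"
  have fin: "finite ?S" by simp
  have "(0::nat) \<in> {..<4}" by simp
  then have ne: "?S \<noteq> {}" by blast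
  obtain k where k: "k < 4" "cmod (x k) = Max ?S" using Max_in[OF fin ne] by auto
  have "\<forall>k'<4. cmod (x k') \<le> Max ?S" using Max_ge[OF fin] by auto
  then show ?thesis using k by auto
qed

lemma fidx: "fidx x < 4 \<and> (\<forall>k'<4. cmod (x k') \<le> cmod (x (fidx x)))"
  unfolding fidx_def by (rule LeastI_ex) (rule fidx_ex)

lemma fidx_less: "k < fidx x \<Longrightarrow> cmod (x k) < cmod (fmax x)"
proof -
  assume k: "k < fidx x"
  have k4: "k < 4" using k fidx[of x] by simp
  have "\<not> (k < 4 \<and> (\<forall>k'<4. cmod (x k') \<le> cmod (x k)))"
    using not_less_Least[OF k[unfolded fidx_def]] .
  then obtain k' where k': "k' < 4" "cmod (x k) < cmod (x k')" using k4 by (auto simp: not_le)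
  then show ?thesis using fidx[of x] unfolding fmax_def by force
qed

lemma fmax_zero: "fmax x = 0 \<longleftrightarrow> (\<forall>k<4. x k = 0)"
proof
  assume "fmax x = 0"
  then show "\<forall>k<4. x k = 0" using fidx[of x] unfolding fmax_def by fastforce
next
  assume "\<forall>k<4. x k = 0"
  then show "fmax x = 0" using fidx[of x] unfolding fmax_def by simp
qed

lemma fidx_sc: "z \<noteq> 0 \<Longrightarrow> fidx (\<lambda>k. z * x k) = fidx x"
proof -
  assume z: "z \<noteq> 0"
  then have zp: "cmod z > 0" by simp
  have "(cmod (z * x k') \<le> cmod (z * x k)) \<longleftrightarrow> (cmod (x k') \<le> cmod (x k))" for k k'
    using zp by (simp add: norm_mult)
  then show ?thesis unfolding fidx_def by simp
qed

lemma fmax_sc: "z \<noteq> 0 \<Longrightarrow> fmax (\<lambda>k. z * x k) = z * fmax x"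
  unfolding fmax_def by (simp add: fidx_sc)

lemma wgt_sc: "z \<noteq> 0 \<Longrightarrow> wgt m (sc z A) = z * wgt m A"
proof (induction m arbitrary: A)
  case 0 then show ?case by (simp add: sc_def)
next
  case (Suc m)
  have e: "(\<lambda>k. wgt m (blk m k (sc z A))) = (\<lambda>k. z * wgt m (blk m k A))"
    using Suc by (simp add: blk_sc)
  show ?case using Suc by (simp add: allsame_sc blk_sc e fmax_sc)
qed

lemma core_sc: "z \<noteq> 0 \<Longrightarrow> core m (sc z A) = (fst (core m A), sc z (snd (core m A)))"
proof (induction m arbitrary: A)
  case 0 then show ?case by simp
next
  case (Suc m)
  then show ?case by (simp add: allsame_sc blk_sc)
qed

lemma canon_sc: "z \<noteq> 0 \<Longrightarrow> canon m (sc z A) = canon m A"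
proof -
  assume z: "z \<noteq> 0"
  have "1 / (z * wgt m A) * z = 1 / wgt m A" using z by (cases "wgt m A = 0") auto
  then show ?thesis unfolding canon_def using z by (simp add: wgt_sc core_sc sc_sc)
qed

lemma core_le: "fst (core m A) \<le> m"
  by (induction m arbitrary: A) (auto simp: le_SucI)

lemma core_val:
  "r < 2^m \<Longrightarrow> c < 2^m \<Longrightarrow> A r c = snd (core m A) (r mod 2^(fst (core m A))) (c mod 2^(fst (core m A)))"
proof (induction m arbitrary: A r c)
  case 0 then show ?case by simp
next
  case (Suc m)
  show ?case
  proof (cases "allsame m A")
    case True
    let ?k = "2 * (r div 2^m) + c div 2^m"
    have k4: "?k < 4"
    proof -
      have "r div 2^m < 2" "c div 2^m < 2" using Suc.prems by (metis less_mult_imp_div_less power_Suc)+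
      then show ?thesis by simp
    qed
    have "A r c = blk m ?k A (r mod 2^m) (c mod 2^m)" by (rule A_blk[OF Suc.prems])
    also have "\<dots> = blk m 0 A (r mod 2^m) (c mod 2^m)"
    proof -
      have "blk m ?k A = blk m 0 A" using True k4 unfolding allsame_def by blast
      then show ?thesis by (simp only:)
    qed
    also have "\<dots> = snd (core m (blk m 0 A)) (r mod 2^m mod 2^(fst (core m (blk m 0 A)))) (c mod 2^m mod 2^(fst (core m (blk m 0 A))))"
      by (rule Suc.IH) simp_all
    also have "\<dots> = snd (core m (blk m 0 A)) (r mod 2^(fst (core m (blk m 0 A)))) (c mod 2^(fst (core m (blk m 0 A))))"
      using core_le[of m "blk m 0 A"] by (simp add: mod_mod_pow)
    finally show ?thesis using True by simp
  next
    case False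
    then show ?thesis using Suc.prems by simp
  qed
qed

lemma wgt_core: "wgt m A = wgt (fst (core m A)) (snd (core m A))"
  by (induction m arbitrary: A) auto

lemma core_top: "0 < fst (core m A) \<Longrightarrow> \<not> allsame (fst (core m A) - 1) (snd (core m A))"
  by (induction m arbitrary: A) auto

lemma blk_zero_iff:
  "(\<forall>r c. r < 2^(Suc m) \<longrightarrow> c < 2^(Suc m) \<longrightarrow> A r c = 0) \<longleftrightarrow>
   (\<forall>k<4. \<forall>r c. r < 2^m \<longrightarrow> c < 2^m \<longrightarrow> blk m k A r c = 0)"
proof
  assume H: "\<forall>r c. r < 2^(Suc m) \<longrightarrow> c < 2^(Suc m) \<longrightarrow> A r c = 0"
  show "\<forall>k<4. \<forall>r c. r < 2^m \<longrightarrow> c < 2^m \<longrightarrow> blk m k A r c = 0"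
  proof (intro allI impI)
    fix k r c :: nat assume k: "k < (4::nat)" and r: "r < 2^m" and c: "c < 2^m"
    have kd: "k div 2 \<le> 1" "k mod 2 \<le> 1" using k by auto
    have "k div 2 * 2 ^ m \<le> 1 * 2^m" "k mod 2 * 2 ^ m \<le> 1 * 2^m" using kd by (intro mult_right_mono; simp)+
    then have "k div 2 * 2 ^ m + r < 2^(Suc m)" "k mod 2 * 2 ^ m + c < 2^(Suc m)" using r c by (simp_all only: power_Suc; linarith)+
    then show "blk m k A r c = 0" using H r c unfolding blk_def by simp
  qed
next
  assume H: "\<forall>k<4. \<forall>r c. r < 2^m \<longrightarrow> c < 2^m \<longrightarrow> blk m k A r c = 0"
  show "\<forall>r c. r < 2^(Suc m) \<longrightarrow> c < 2^(Suc m) \<longrightarrow> A r c = 0"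
  proof (intro allI impI)
    fix r c :: nat assume r: "r < 2^(Suc m)" and c: "c < 2^(Suc m)"
    have "r div 2^m < 2" "c div 2^m < 2" using r c by (metis less_mult_imp_div_less power_Suc)+
    then have k4: "2 * (r div 2^m) + c div 2^m < 4" by simp
    show "A r c = 0" using A_blk[OF r c, of A] H k4 by simp
  qed
qed

lemma wgt_zero: "wgt m A = 0 \<longleftrightarrow> (\<forall>r c. r < 2^m \<longrightarrow> c < 2^m \<longrightarrow> A r c = 0)"
proof (induction m arbitrary: A)
  case 0 then show ?case by simp
next
  case (Suc m)
  show ?case
  proof (cases "allsame m A")
    case True
    have bb: "\<And>k. k < 4 \<Longrightarrow> blk m k A = blk m 0 A" using True unfolding allsame_def by blast
    have "wgt (Suc m) A = 0 \<longleftrightarrow> (\<forall>r c. r < 2^m \<longrightarrow> c < 2^m \<longrightarrow> blk m 0 A r c = 0)"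
      using Suc.IH[of "blk m 0 A"] True by simp
    also have "\<dots> \<longleftrightarrow> (\<forall>k<4. \<forall>r c. r < 2^m \<longrightarrow> c < 2^m \<longrightarrow> blk m k A r c = 0)"
      using bb by (metis zero_less_numeral)
    finally have "wgt (Suc m) A = 0 \<longleftrightarrow> (\<forall>k<4. \<forall>r c. r < 2^m \<longrightarrow> c < 2^m \<longrightarrow> blk m k A r c = 0)" .
    then show ?thesis using blk_zero_iff by blast
  next
    case False
    then have "wgt (Suc m) A = 0 \<longleftrightarrow> (\<forall>k<4. \<forall>r c. r < 2^m \<longrightarrow> c < 2^m \<longrightarrow> blk m k A r c = 0)"
      using Suc.IH by (simp add: fmax_zero)
    then show ?thesis using blk_zero_iff by blast
  qed
qed

lemma core_sub:
  "m \<le> n \<Longrightarrow> x < 2^(n-m) \<Longrightarrow> y < 2^(n-m) \<Longrightarrow>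
   \<exists>x' y'. x' < 2^(n - fst (core m (sub m x y U))) \<and> y' < 2^(n - fst (core m (sub m x y U))) \<and>
     snd (core m (sub m x y U)) = sub (fst (core m (sub m x y U))) x' y' U"
proof (induction m arbitrary: x y)
  case 0 then show ?case by auto
next
  case (Suc m)
  show ?case
  proof (cases "allsame m (sub (Suc m) x y U)")
    case True
    have e: "core (Suc m) (sub (Suc m) x y U) = core m (sub m (2 * x) (2 * y) U)"
      using True blk_sub[of 0 m x y U] by simp
    have nm: "n - m = Suc (n - Suc m)" using Suc.prems(1) by simp
    have "2 * x < 2^(n-m)" "2 * y < 2^(n-m)" using Suc.prems(2,3) nm by simp_all
    then show ?thesis unfolding e using Suc.IH Suc.prems(1) by simp
  next
    case False
    then show ?thesis using Suc.prems by auto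
  qed
qed

definition NS :: "nat \<Rightarrow> cmatrix \<Rightarrow> (nat \<times> cmatrix) set" where
  "NS n U = (\<lambda>(m, x, y). canon m (sub m x y U)) `
     {(m, x, y). m \<le> n \<and> x < 2^(n-m) \<and> y < 2^(n-m) \<and> wgt m (sub m x y U) \<noteq> 0 \<and> 0 < fst (core m (sub m x y U))}"

lemma finite_NS: "finite (NS n U)"
proof -
  have "{(m, x, y). m \<le> n \<and> x < 2^(n-m) \<and> y < 2^(n-m) \<and> wgt m (sub m x y U) \<noteq> 0 \<and> 0 < fst (core m (sub m x y U))}
     \<subseteq> {..n} \<times> {..<(2::nat)^n} \<times> {..<(2::nat)^n}"
  proof (clarsimp)
    fix m x y :: nat assume "m \<le> n" "x < 2^(n-m)" "y < 2^(n-m)"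
    moreover have "(2::nat)^(n-m) \<le> 2^n" by (intro power_increasing) auto
    ultimately show "x < 2^n \<and> y < 2^n" by linarith
  qed
  then show ?thesis unfolding NS_def by (rule finite_imageI[OF finite_subset]) auto
qed

lemma mem_NS:
  assumes "m \<le> n" "x < 2^(n-m)" "y < 2^(n-m)" "z \<noteq> 0"
    "wgt m (sc z (sub m x y U)) \<noteq> 0" "0 < fst (core m (sc z (sub m x y U)))"
  shows "canon m (sc z (sub m x y U)) \<in> NS n U"
proof -
  have "wgt m (sub m x y U) \<noteq> 0" using assms(4,5) by (simp add: wgt_sc)
  moreover have "0 < fst (core m (sub m x y U))" using assms(4,6) by (simp add: core_sc)
  ultimately have "(m, x, y) \<in> {(m, x, y). m \<le> n \<and> x < 2^(n-m) \<and> y < 2^(n-m) \<and> wgt m (sub m x y U) \<noteq> 0 \<and> 0 < fst (core m (sub m x y U))}"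
    using assms(1-3) by simp
  then show ?thesis unfolding NS_def canon_sc[OF assms(4)] by (rule rev_image_eqI) simp
qed

lemma NS_elem:
  assumes "(m', A) \<in> NS n U"
  shows "0 < m' \<and> m' \<le> n \<and> (\<exists>x y w. x < 2^(n-m') \<and> y < 2^(n-m') \<and> w \<noteq> 0 \<and> A = sc w (sub m' x y U)) \<and>
         \<not> allsame (m' - 1) A \<and> wgt m' A = 1"
proof -
  obtain m x y where m: "m \<le> n" "x < 2^(n-m)" "y < 2^(n-m)" "wgt m (sub m x y U) \<noteq> 0"
    "0 < fst (core m (sub m x y U))" "(m', A) = canon m (sub m x y U)"
    using assms unfolding NS_def by auto
  define S where "S = sub m x y U"
  define C where "C = snd (core m S)"
  have m': "m' = fst (core m S)" and A: "A = sc (1 / wgt m S) C"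
    using m(6) unfolding canon_def S_def C_def by auto
  have le: "m' \<le> m" using core_le m' by simp
  obtain x' y' where xy: "x' < 2^(n - m')" "y' < 2^(n - m')" "C = sub m' x' y' U"
    using core_sub[OF m(1-3), of U] unfolding C_def S_def m' by blast
  have w: "1 / wgt m S \<noteq> 0" using m(4) S_def by simp
  have na: "\<not> allsame (m' - 1) C" using core_top[of m S] m(5) unfolding C_def S_def m' by simp
  have "wgt m' C = wgt m S" using wgt_core[of m S] unfolding C_def m' by simp
  then have "wgt m' A = 1" using m(4) unfolding A S_def by (simp add: wgt_sc)
  moreover have "\<not> allsame (m' - 1) A" using na w unfolding A by (simp add: allsame_sc)
  moreover have "0 < m'" using m(5) m' S_def by simp
  moreover have "m' \<le> n" using le m(1) by simp
  moreover have "\<exists>x y w. x < 2^(n-m') \<and> y < 2^(n-m') \<and> w \<noteq> 0 \<and> A = sc w (sub m' x y U)"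
    using xy w A by blast
  ultimately show ?thesis by blast
qed

definition tgt :: "nat \<Rightarrow> ((nat \<times> cmatrix) \<Rightarrow> nat) \<Rightarrow> nat \<Rightarrow> cmatrix \<Rightarrow> nat" where
  "tgt N e m B = (if wgt m B = 0 \<or> fst (core m B) = 0 then N else e (canon m B))"

definition mkQ :: "nat \<Rightarrow> cmatrix \<Rightarrow> nat \<Rightarrow> ((nat \<times> cmatrix) \<Rightarrow> nat) \<Rightarrow> (nat \<Rightarrow> nat \<times> cmatrix) \<Rightarrow> qmdd" where
  "mkQ n U0 N e d = \<lparr> inodes = {0..<N}, tnode = N, ind = (\<lambda>i. n - fst (d i)),
     succ = (\<lambda>i k. tgt N e (fst (d i) - 1) (blk (fst (d i) - 1) k (snd (d i)))),
     wt = (\<lambda>i k. wgt (fst (d i) - 1) (blk (fst (d i) - 1) k (snd (d i)))),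
     root = tgt N e n U0, root_wt = wgt n U0 \<rparr>"

lemma bitk:
  assumes "Suc m \<le> n"
  shows "(r mod 2^(Suc m)) div 2^m = (if var_val n r (n - Suc m) then 1 else 0)"
proof -
  have e: "n - 1 - (n - Suc m) = m" using assms by simp
  have "(r mod 2^(Suc m)) div 2^m = (r div 2^m) mod 2"
    by (metis Nat.add_0_right add_Suc_right div_exp_mod_exp_eq power_Suc0_right)
  then show ?thesis unfolding var_val_def e by (simp add: odd_iff_mod_2_eq_one)
qed

lemma A_kk:
  assumes "Suc m \<le> n"
  shows "A (r mod 2^(Suc m)) (c mod 2^(Suc m)) = blk m (kk n (n - Suc m) r c) A (r mod 2^m) (c mod 2^m)"
proof -
  have "A (r mod 2^(Suc m)) (c mod 2^(Suc m)) =
    blk m (2 * (r mod 2^(Suc m) div 2^m) + c mod 2^(Suc m) div 2^m) A (r mod 2^(Suc m) mod 2^m) (c mod 2^(Suc m) mod 2^m)"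
    by (rule A_blk) simp_all
  also have "\<dots> = blk m (kk n (n - Suc m) r c) A (r mod 2^m) (c mod 2^m)"
  proof -
    have "r mod 2^(Suc m) mod 2^m = r mod 2^m" "c mod 2^(Suc m) mod 2^m = c mod 2^m"
      by (rule mod_mod_pow, simp)+
    then show ?thesis unfolding bitk[OF assms] kk_def by simp
  qed
  finally show ?thesis .
qed

context
  fixes n :: nat and Up :: cmatrix and N :: nat and e :: "nat \<times> cmatrix \<Rightarrow> nat" and d :: "nat \<Rightarrow> nat \<times> cmatrix"
  assumes A1: "\<forall>P\<in>NS n Up. e P < N \<and> d (e P) = P"
      and A2: "\<forall>i<N. d i \<in> NS n Up \<and> e (d i) = i"
begin

abbreviation "U0 \<equiv> sub n 0 0 Up"
abbreviation "Q0 \<equiv> mkQ n U0 N e d"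

lemma Q0_simps:
  "inodes Q0 = {0..<N}" "tnode Q0 = N" "ind Q0 i = n - fst (d i)"
  "succ Q0 i k = tgt N e (fst (d i) - 1) (blk (fst (d i) - 1) k (snd (d i)))"
  "wt Q0 i k = wgt (fst (d i) - 1) (blk (fst (d i) - 1) k (snd (d i)))"
  "root Q0 = tgt N e n U0" "root_wt Q0 = wgt n U0"
  by (simp_all add: mkQ_def)

lemma d_props:
  assumes "i < N"
  shows "0 < fst (d i) \<and> fst (d i) \<le> n \<and>
    (\<exists>x y w. x < 2^(n - fst (d i)) \<and> y < 2^(n - fst (d i)) \<and> w \<noteq> 0 \<and> snd (d i) = sc w (sub (fst (d i)) x y Up)) \<and>
    \<not> allsame (fst (d i) - 1) (snd (d i)) \<and> wgt (fst (d i)) (snd (d i)) = 1"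
proof -
  have "(fst (d i), snd (d i)) \<in> NS n Up" using A2 assms by simp
  then show ?thesis by (rule NS_elem)
qed

lemma child_form:
  assumes i: "i < N" and k: "k < 4"
  shows "\<exists>x y w. x < 2^(n - (fst (d i) - 1)) \<and> y < 2^(n - (fst (d i) - 1)) \<and> w \<noteq> 0 \<and>
     blk (fst (d i) - 1) k (snd (d i)) = sc w (sub (fst (d i) - 1) x y Up)"
proof -
  obtain x y w where xy: "x < 2^(n - fst (d i))" "y < 2^(n - fst (d i))" "w \<noteq> 0"
      "snd (d i) = sc w (sub (fst (d i)) x y Up)" and pos: "0 < fst (d i)" and le: "fst (d i) \<le> n"
    using d_props[OF i] by blast
  define m1 where "m1 = fst (d i) - 1"
  have m: "fst (d i) = Suc m1" using pos m1_def by simp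
  have "blk m1 k (snd (d i)) = sc w (sub m1 (2 * x + k div 2) (2 * y + k mod 2) Up)"
    unfolding xy(4) m blk_sc blk_sub[OF k] ..
  moreover have nm: "n - m1 = Suc (n - Suc m1)" using le m by simp
  moreover have "2 * x + k div 2 < 2^(n - m1)" "2 * y + k mod 2 < 2^(n - m1)"
    using xy(1,2) k unfolding nm m by auto
  ultimately show ?thesis using xy(3) unfolding m1_def by blast
qed

lemma tgt_props:
  assumes "m0 \<le> n" "x < 2^(n-m0)" "y < 2^(n-m0)" "z \<noteq> 0" "B = sc z (sub m0 x y Up)"
  shows "tgt N e m0 B = N \<or> (tgt N e m0 B < N \<and> d (tgt N e m0 B) = canon m0 B \<and> wgt m0 B \<noteq> 0 \<and> 0 < fst (core m0 B))"
proof (cases "wgt m0 B = 0 \<or> fst (core m0 B) = 0")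
  case True then show ?thesis by (simp add: tgt_def)
next
  case False
  then have "canon m0 B \<in> NS n Up" using mem_NS[OF assms(1-4)] assms(5) by simp
  then show ?thesis using A1 False by (simp add: tgt_def)
qed

lemma wfq_Q0: "wfq n Q0"
  unfolding wfq_def
proof (intro conjI ballI allI impI)
  show "finite (inodes Q0)" by (simp add: Q0_simps)
  show "tnode Q0 \<notin> inodes Q0" by (simp add: Q0_simps)
  have "tgt N e n U0 = N \<or> (tgt N e n U0 < N \<and> d (tgt N e n U0) = canon n U0 \<and> wgt n U0 \<noteq> 0 \<and> 0 < fst (core n U0))"
    using tgt_props[of n 0 0 1 U0] by (simp add: sc_one)
  then have "tgt N e n U0 = N \<or> tgt N e n U0 < N" by blast
  then show "root Q0 \<in> all_nodes Q0" by (auto simp: Q0_simps all_nodes_def)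
next
  fix v assume "v \<in> inodes Q0"
  then have v: "v < N" by (simp add: Q0_simps)
  then show "ind Q0 v < n" using d_props[OF v] by (simp add: Q0_simps)
next
  fix v k assume "v \<in> inodes Q0" and k: "k < (4::nat)"
  then have v: "v < N" by (simp add: Q0_simps)
  obtain x y w where xy: "x < 2^(n - (fst (d v) - 1))" "y < 2^(n - (fst (d v) - 1))" "w \<noteq> 0"
      "blk (fst (d v) - 1) k (snd (d v)) = sc w (sub (fst (d v) - 1) x y Up)"
    using child_form[OF v k] by blast
  have pos: "0 < fst (d v)" "fst (d v) \<le> n" using d_props[OF v] by auto
  note T = tgt_props[OF _ xy(1,2,3) xy(4)]
  have T': "tgt N e (fst (d v) - 1) (blk (fst (d v) - 1) k (snd (d v))) = N \<or>
      (tgt N e (fst (d v) - 1) (blk (fst (d v) - 1) k (snd (d v))) < N \<and>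
       d (tgt N e (fst (d v) - 1) (blk (fst (d v) - 1) k (snd (d v)))) = canon (fst (d v) - 1) (blk (fst (d v) - 1) k (snd (d v))))"
    using T pos by auto
  then show "succ Q0 v k \<in> all_nodes Q0" by (auto simp: Q0_simps all_nodes_def)
  show "ind Q0 v < nind n Q0 (succ Q0 v k)"
  proof (cases "tgt N e (fst (d v) - 1) (blk (fst (d v) - 1) k (snd (d v))) = N")
    case True
    then show ?thesis using pos by (simp add: Q0_simps nind_def)
  next
    case False
    let ?t = "tgt N e (fst (d v) - 1) (blk (fst (d v) - 1) k (snd (d v)))"
    have t: "?t < N" "d ?t = canon (fst (d v) - 1) (blk (fst (d v) - 1) k (snd (d v)))" using T' False by auto
    have "fst (d ?t) \<le> fst (d v) - 1" using t(2) core_le by (simp add: canon_def)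
    then show ?thesis using t(1) pos by (simp add: Q0_simps nind_def)
  qed
qed

lemma N_notin: "N \<notin> inodes Q0" by (simp add: Q0_simps)

lemma edge_sem:
  assumes m0: "m0 \<le> n" and xy: "x < 2^(n-m0)" "y < 2^(n-m0)" and z: "z \<noteq> 0" and B: "B = sc z (sub m0 x y Up)"
    and H: "\<forall>i<N. fst (d i) \<le> m0 \<longrightarrow> (\<forall>j r c. j \<le> n - fst (d i) \<longrightarrow> r < 2^n \<longrightarrow> c < 2^n \<longrightarrow>
             nsem n Q0 i j r c = snd (d i) (r mod 2^fst (d i)) (c mod 2^fst (d i)))"
    and j: "j \<le> n - m0" and r: "r < 2^n" and c: "c < 2^n"
  shows "wgt m0 B * nsem n Q0 (tgt N e m0 B) j r c = B (r mod 2^m0) (c mod 2^m0)"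
proof -
  have rr: "r mod 2^m0 < 2^m0" and cc: "c mod 2^m0 < 2^m0" by simp_all
  show ?thesis
  proof (cases "wgt m0 B = 0")
    case True
    then have "B (r mod 2^m0) (c mod 2^m0) = 0" using wgt_zero[of m0 B] rr cc by blast
    then show ?thesis using True by simp
  next
    case nz: False
    show ?thesis
    proof (cases "fst (core m0 B) = 0")
      case True
      have t: "tgt N e m0 B = N" using True by (simp add: tgt_def)
      have "B (r mod 2^m0) (c mod 2^m0) = snd (core m0 B) 0 0"
        using core_val[OF rr cc, of B] True by simp
      moreover have "wgt m0 B = snd (core m0 B) 0 0" using wgt_core[of m0 B] True by simp
      ultimately show ?thesis using t nsem_out[OF N_notin] by simp
    next
      case False
      define t where "t = tgt N e m0 B"
      have "canon m0 B \<in> NS n Up" using mem_NS[OF m0 xy z] nz False B by simp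
      then have T: "t < N" "d t = canon m0 B" using A1 nz False t_def by (auto simp: tgt_def)
      define m2 where "m2 = fst (core m0 B)"
      define C where "C = snd (core m0 B)"
      have dt: "fst (d t) = m2" "snd (d t) = sc (1 / wgt m0 B) C" using T(2) by (simp_all add: canon_def m2_def C_def)
      have le: "m2 \<le> m0" using core_le m2_def by simp
      have "nsem n Q0 t j r c = snd (d t) (r mod 2^fst (d t)) (c mod 2^fst (d t))"
        using H T(1) dt(1) le j r c by auto
      then have "wgt m0 B * nsem n Q0 t j r c = C (r mod 2^m2) (c mod 2^m2)"
        using nz dt by (simp add: sc_def)
      also have "\<dots> = B (r mod 2^m0) (c mod 2^m0)"
        using core_val[OF rr cc, of B] le unfolding C_def m2_def by (simp add: mod_mod_pow)
      finally show ?thesis unfolding t_def .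
    qed
  qed
qed

lemma sem_le:
  "\<forall>i<N. fst (d i) \<le> m \<longrightarrow> (\<forall>j r c. j \<le> n - fst (d i) \<longrightarrow> r < 2^n \<longrightarrow> c < 2^n \<longrightarrow>
             nsem n Q0 i j r c = snd (d i) (r mod 2^fst (d i)) (c mod 2^fst (d i)))"
proof (induction m)
  case 0
  then show ?case using d_props by fastforce
next
  case (Suc m)
  show ?case
  proof (intro allI impI)
    fix i j r c :: nat assume i: "i < N" and le: "fst (d i) \<le> Suc m" and j: "j \<le> n - fst (d i)"
      and r: "r < 2^n" and c: "c < 2^n"
    show "nsem n Q0 i j r c = snd (d i) (r mod 2^fst (d i)) (c mod 2^fst (d i))"
    proof (cases "fst (d i) \<le> m")
      case True then show ?thesis using Suc.IH i j r c by blast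
    next
      case False
      then have fm: "fst (d i) = Suc m" using le by simp
      have mn: "Suc m \<le> n" using d_props[OF i] fm by simp
      define p where "p = n - Suc m"
      define k where "k = kk n p r c"
      have k4: "k < 4" unfolding k_def by (rule kk_less)
      have iin: "i \<in> inodes Q0" using i by (simp add: Q0_simps)
      have ip: "ind Q0 i = p" using fm by (simp add: Q0_simps p_def)
      have pn: "p < n" using mn p_def by simp
      have "nsem n Q0 i j r c = nsem n Q0 i p r c"
        using nsem_skip_in[OF iin, of j] ip j fm p_def by simp
      also have "\<dots> = wt Q0 i k * nsem n Q0 (succ Q0 i k) (Suc p) r c"
        using nsem_node[OF iin ip pn] k_def by simp
      also have "\<dots> = wgt m (blk m k (snd (d i))) * nsem n Q0 (tgt N e m (blk m k (snd (d i)))) (Suc p) r c"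
        using fm by (simp add: Q0_simps)
      also have "\<dots> = blk m k (snd (d i)) (r mod 2^m) (c mod 2^m)"
      proof -
        obtain x y w where xy: "x < 2^(n - m)" "y < 2^(n - m)" "w \<noteq> 0"
            "blk m k (snd (d i)) = sc w (sub m x y Up)"
          using child_form[OF i k4] fm by auto
        show ?thesis
          by (rule edge_sem[OF _ xy(1,2,3) xy(4) Suc.IH _ r c]) (use mn p_def in auto)
      qed
      also have "\<dots> = snd (d i) (r mod 2^fst (d i)) (c mod 2^fst (d i))"
        using A_kk[OF mn, of "snd (d i)" r c] fm k_def p_def by simp
      finally show ?thesis .
    qed
  qed
qed

lemma sem:
  "i < N \<Longrightarrow> j \<le> n - fst (d i) \<Longrightarrow> r < 2^n \<Longrightarrow> c < 2^n \<Longrightarrow>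
   nsem n Q0 i j r c = snd (d i) (r mod 2^fst (d i)) (c mod 2^fst (d i))"
  using sem_le[of "fst (d i)"] by blast

lemma mat_Q0: "r < 2^n \<Longrightarrow> c < 2^n \<Longrightarrow> qmdd_mat n Q0 r c = Up r c"
proof -
  assume r: "r < 2^n" and c: "c < 2^n"
  have "qmdd_mat n Q0 r c = wgt n U0 * nsem n Q0 (tgt N e n U0) 0 r c"
    by (simp add: qmdd_mat_def Q0_simps)
  also have "\<dots> = U0 (r mod 2^n) (c mod 2^n)"
    by (rule edge_sem[of n 0 0 1]) (use sem r c in \<open>auto simp: sc_one\<close>)
  also have "\<dots> = Up r c" using r c by (simp add: sub_def)
  finally show ?thesis .
qed

lemma zo_d: "i < N \<Longrightarrow> zo (fst (d i)) (snd (d i))"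
  using d_props[of i] zo_sc zo_sub by metis

lemma reduced_Q0: "reduced Q0"
  unfolding reduced_def
proof (intro conjI ballI impI notI)
  fix u v assume u: "u \<in> inodes Q0" and v: "v \<in> inodes Q0" and uv: "u \<noteq> v" and iso: "iso_nodes Q0 u v"
  have ui: "u < N" and vi: "v < N" using u v by (simp_all add: Q0_simps)
  have "n - fst (d u) = n - fst (d v)" using iso unfolding iso_nodes_def by (simp add: Q0_simps)
  then have fm: "fst (d u) = fst (d v)" using d_props[OF ui] d_props[OF vi] by linarith
  define m where "m = fst (d u)"
  define p where "p = n - m"
  have pn: "p < n" using d_props[OF ui] m_def p_def by simp
  have up: "ind Q0 u = p" and vp: "ind Q0 v = p" using fm by (simp_all add: Q0_simps m_def p_def)
  have eqn: "nsem n Q0 u p r c = nsem n Q0 v p r c" for r c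
  proof -
    have k: "kk n p r c < 4" by (rule kk_less)
    then show ?thesis using nsem_node[OF u up pn] nsem_node[OF v vp pn] iso unfolding iso_nodes_def by simp
  qed
  have sd: "snd (d u) = snd (d v)"
  proof (intro ext)
    fix r c
    show "snd (d u) r c = snd (d v) r c"
    proof (cases "r < 2^m \<and> c < 2^m")
      case True
      have "(2::nat)^m \<le> 2^n" using d_props[OF ui] m_def by (intro power_increasing) auto
      then have rc: "r < 2^n" "c < 2^n" using True by linarith+
      have "snd (d u) (r mod 2^m) (c mod 2^m) = snd (d v) (r mod 2^m) (c mod 2^m)"
        using sem[OF ui _ rc, of p] sem[OF vi _ rc, of p] eqn fm m_def p_def by simp
      then show ?thesis using True by simp
    next
      case False
      then show ?thesis using zo_d[OF ui] zo_d[OF vi] fm m_def unfolding zo_def by metis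
    qed
  qed
  have "d u = d v" using fm sd by (simp add: prod_eq_iff)
  then have "u = v" using A2 ui vi by metis
  then show False using uv by simp
next
  fix v assume v: "v \<in> inodes Q0" and same: "\<forall>k<4. succ Q0 v k = succ Q0 v 0 \<and> wt Q0 v k = wt Q0 v 0"
  have vi: "v < N" using v by (simp add: Q0_simps)
  define A where "A = snd (d v)"
  define m1 where "m1 = fst (d v) - 1"
  have fm: "fst (d v) = Suc m1" using d_props[OF vi] m1_def by simp
  have mn: "Suc m1 \<le> n" using d_props[OF vi] fm by simp
  define p where "p = n - Suc m1"
  have pn: "p < n" using mn p_def by simp
  have vp: "ind Q0 v = p" using fm by (simp add: Q0_simps p_def)
  have np: "n - Suc p = m1" using mn p_def by simp
  have key: "blk m1 k A \<rho> \<gamma> = wt Q0 v 0 * nsem n Q0 (succ Q0 v 0) (Suc p) \<rho> \<gamma>"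
    if k: "k < 4" and \<rho>: "\<rho> < 2^m1" and \<gamma>: "\<gamma> < 2^m1" for k \<rho> \<gamma>
  proof -
    define r where "r = (k div 2) * 2^m1 + \<rho>"
    define c where "c = (k mod 2) * 2^m1 + \<gamma>"
    have kd: "k div 2 * 2 ^ m1 \<le> 1 * 2^m1" "k mod 2 * 2 ^ m1 \<le> 1 * 2^m1" using k by (intro mult_right_mono; auto)+
    have rm: "r < 2^(Suc m1)" "c < 2^(Suc m1)" unfolding r_def c_def using kd \<rho> \<gamma> by (simp_all only: power_Suc; linarith)+
    have "(2::nat)^(Suc m1) \<le> 2^n" using mn by (intro power_increasing) auto
    then have rc: "r < 2^n" "c < 2^n" using rm by linarith+
    have rmod: "r mod 2^m1 = \<rho>" "c mod 2^m1 = \<gamma>" unfolding r_def c_def using \<rho> \<gamma> by simp_all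
    have "blk m1 k A \<rho> \<gamma> = A r c" unfolding blk_def r_def c_def using \<rho> \<gamma> by simp
    also have "\<dots> = A (r mod 2^(Suc m1)) (c mod 2^(Suc m1))" using rm by simp
    also have "\<dots> = nsem n Q0 v p r c" using sem[OF vi _ rc, of p] fm p_def A_def by simp
    also have "\<dots> = wt Q0 v (kk n p r c) * nsem n Q0 (succ Q0 v (kk n p r c)) (Suc p) r c"
      using nsem_node[OF v vp pn] by simp
    also have "\<dots> = wt Q0 v 0 * nsem n Q0 (succ Q0 v 0) (Suc p) r c"
    proof -
      have "succ Q0 v (kk n p r c) = succ Q0 v 0 \<and> wt Q0 v (kk n p r c) = wt Q0 v 0"
        using same kk_less[of n p r c] by blast
      then show ?thesis by (simp only:)
    qed
    also have "\<dots> = wt Q0 v 0 * nsem n Q0 (succ Q0 v 0) (Suc p) \<rho> \<gamma>"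
    proof -
      have m1: "r mod 2^(n - Suc p) = \<rho> mod 2^(n - Suc p)" using rmod np \<rho> by simp
      have m2: "c mod 2^(n - Suc p) = \<gamma> mod 2^(n - Suc p)" using rmod np \<gamma> by simp
      show ?thesis using nsem_local[OF m1 m2] by simp
    qed
    finally show ?thesis .
  qed
  have "allsame m1 A"
    unfolding allsame_def
  proof (intro allI impI ext)
    fix k r c :: nat assume k: "k < 4"
    show "blk m1 k A r c = blk m1 0 A r c"
    proof (cases "r < 2^m1 \<and> c < 2^m1")
      case True then show ?thesis using key[OF k] key[of 0] by simp
    next
      case False
      have "blk m1 k A r c = 0" "blk m1 0 A r c = 0" unfolding blk_def using False by (simp only: if_False)+
      then show ?thesis by simp
    qed
  qed
  moreover have "\<not> allsame m1 A" using d_props[OF vi] unfolding m1_def A_def by blast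
  ultimately show False by blast
qed

lemma normalized_Q0: "normalized Q0"
  unfolding normalized_def
proof (intro ballI)
  fix v assume v: "v \<in> inodes Q0"
  have vi: "v < N" using v by (simp add: Q0_simps)
  define A where "A = snd (d v)"
  define m1 where "m1 = fst (d v) - 1"
  have fm: "fst (d v) = Suc m1" using d_props[OF vi] m1_def by simp
  define x where "x = (\<lambda>k. wgt m1 (blk m1 k A))"
  have wtx: "wt Q0 v k = x k" for k by (simp add: Q0_simps x_def A_def m1_def)
  have na: "\<not> allsame m1 A" using d_props[OF vi] unfolding m1_def A_def by blast
  have "wgt (fst (d v)) A = 1" using d_props[OF vi] unfolding A_def by blast
  then have w1: "wgt (Suc m1) A = 1" unfolding fm .
  have "wgt (Suc m1) A = fmax x" using na unfolding x_def by simp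
  then have fx: "fmax x = 1" using w1 by simp
  have z: "\<forall>k<4. wt Q0 v k = 0 \<longrightarrow> succ Q0 v k = tnode Q0"
    by (simp add: Q0_simps tgt_def)
  have b: "\<forall>k<4. cmod (wt Q0 v k) \<le> 1" using fidx[of x] fx unfolding wtx fmax_def by simp
  have f3: "\<forall>k'<fidx x. cmod (x k') \<noteq> 1"
  proof (intro allI impI)
    fix k' assume "k' < fidx x"
    then have "cmod (x k') < 1" using fidx_less[of k' x] fx by simp
    then show "cmod (x k') \<noteq> 1" by simp
  qed
  have "fidx x < 4" "x (fidx x) = 1" using fidx[of x] fx unfolding fmax_def by auto
  note this f3
  then have "\<exists>k<4. cmod (wt Q0 v k) = 1 \<and> wt Q0 v k = 1 \<and> (\<forall>k'<k. cmod (wt Q0 v k') \<noteq> 1)"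
    unfolding wtx by (intro exI[of _ "fidx x"]) simp
  then show "(\<forall>k<4. wt Q0 v k = 0 \<longrightarrow> succ Q0 v k = tnode Q0) \<and> (\<forall>k<4. cmod (wt Q0 v k) \<le> 1) \<and>
        (\<exists>k<4. cmod (wt Q0 v k) = 1 \<and> wt Q0 v k = 1 \<and> (\<forall>k'<k. cmod (wt Q0 v k') \<noteq> 1))"
    using z b by blast
qed

end

definition gcQ :: "qmdd \<Rightarrow> qmdd" where
  "gcQ Q = Q\<lparr>inodes := {v \<in> inodes Q. (root Q, v) \<in> (edge_rel Q)\<^sup>*}\<rparr>"

lemma gc_simps:
  "inodes (gcQ Q) = {v \<in> inodes Q. (root Q, v) \<in> (edge_rel Q)\<^sup>*}"
  "tnode (gcQ Q) = tnode Q" "ind (gcQ Q) = ind Q" "succ (gcQ Q) = succ Q" "wt (gcQ Q) = wt Q"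
  "root (gcQ Q) = root Q" "root_wt (gcQ Q) = root_wt Q"
  by (simp_all add: gcQ_def)

lemma reach_t:
  assumes wf: "wfq n Q" and v: "v \<in> all_nodes Q"
  shows "(v, tnode Q) \<in> (edge_rel Q)\<^sup>*"
  using v
proof (induction "n - nind n Q v" arbitrary: v rule: less_induct)
  case less
  show ?case
  proof (cases "v \<in> inodes Q")
    case False
    then show ?thesis using all_nodes_cases[OF less.prems] by simp
  next
    case True
    define s where "s = succ Q v 0"
    have s: "s \<in> all_nodes Q" "ind Q v < nind n Q s" using wfq_succ[OF wf True, of 0] s_def by auto
    have "n - nind n Q s < n - nind n Q v"
      using s(2) True nind_le[OF wf, of s] by (simp add: nind_in)
    then have "(s, tnode Q) \<in> (edge_rel Q)\<^sup>*" using less.hyps s(1) by blast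
    moreover have "(v, s) \<in> edge_rel Q" unfolding edge_rel_def s_def using True by force
    ultimately show ?thesis by (rule converse_rtrancl_into_rtrancl[rotated])
  qed
qed

lemma reach_gc:
  assumes "(root Q, v) \<in> (edge_rel Q)\<^sup>*"
  shows "(root Q, v) \<in> (edge_rel (gcQ Q))\<^sup>*"
  using assms
proof (induction rule: rtrancl_induct)
  case base then show ?case by simp
next
  case (step y z)
  from step(2) obtain k where k: "y \<in> inodes Q" "k < 4" "z = succ Q y k"
    unfolding edge_rel_def by blast
  have "(y, z) \<in> edge_rel (gcQ Q)"
    unfolding edge_rel_def using k step(1) by (auto simp: gc_simps)
  then show ?case using step(3) gc_simps(6) by (metis rtrancl.rtrancl_into_rtrancl)
qed

lemma reach_succ:
  "(root Q, v) \<in> (edge_rel Q)\<^sup>* \<Longrightarrow> v \<in> inodes Q \<Longrightarrow> k < 4 \<Longrightarrow> (root Q, succ Q v k) \<in> (edge_rel Q)\<^sup>*"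
  by (rule rtrancl_into_rtrancl) (auto simp: edge_rel_def)

lemma gc_nsem:
  "(v \<in> inodes Q \<longrightarrow> (root Q, v) \<in> (edge_rel Q)\<^sup>*) \<Longrightarrow> nsem n (gcQ Q) v j r c = nsem n Q v j r c"
proof (induction n Q v j r c rule: nsem.induct)
  case (1 n Q v j r c)
  show ?case
  proof (cases "n \<le> j")
    case True then show ?thesis by (subst (1 2) nsem.simps) simp
  next
    case F1: False
    show ?thesis
    proof (cases "v \<in> inodes Q \<and> ind Q v = j")
      case True
      have vg: "v \<in> inodes (gcQ Q) \<and> ind (gcQ Q) v = j" using True "1.prems" by (simp add: gc_simps)
      have sr: "succ Q v (kk n j r c) \<in> inodes Q \<longrightarrow> (root Q, succ Q v (kk n j r c)) \<in> (edge_rel Q)\<^sup>*"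
        using reach_succ[of Q v "kk n j r c"] True "1.prems" kk_less by blast
      have IH: "nsem n (gcQ Q) (succ Q v (kk n j r c)) (Suc j) r c = nsem n Q (succ Q v (kk n j r c)) (Suc j) r c"
        using "1.IH"(1)[OF F1 True] sr unfolding kk_def by simp
      show ?thesis unfolding nsem_at_node[OF F1 vg] nsem_at_node[OF F1 True] using IH by (simp add: gc_simps)
    next
      case False
      have vg: "\<not> (v \<in> inodes (gcQ Q) \<and> ind (gcQ Q) v = j)" using False by (simp add: gc_simps)
      show ?thesis unfolding nsem_skip1[OF vg F1] nsem_skip1[OF False F1] using "1.IH"(2)[OF F1 False "1.prems"] .
    qed
  qed
qed

lemma gc_props:
  assumes wf: "wfq n Q" and red: "reduced Q" and nor: "normalized Q"
  shows "is_qmdd n (gcQ Q)" "reduced (gcQ Q)" "normalized (gcQ Q)"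
    "\<forall>r c. qmdd_mat n (gcQ Q) r c = qmdd_mat n Q r c"
proof -
  let ?R = "{v. (root Q, v) \<in> (edge_rel Q)\<^sup>*}"
  have sub: "inodes (gcQ Q) \<subseteq> inodes Q" by (auto simp: gc_simps)
  have inR: "v \<in> inodes (gcQ Q) \<longleftrightarrow> v \<in> inodes Q \<and> v \<in> ?R" for v by (simp add: gc_simps)
  have rootQ: "root Q \<in> all_nodes Q" using wf by (simp add: wfq_def)
  have tR: "(root Q, tnode Q) \<in> (edge_rel Q)\<^sup>*" by (rule reach_t[OF wf rootQ])
  show "is_qmdd n (gcQ Q)"
    unfolding is_qmdd_def
  proof (intro conjI ballI allI impI)
    show "finite (inodes (gcQ Q))" using wf sub finite_subset by (auto simp: wfq_def)
    show "tnode (gcQ Q) \<notin> inodes (gcQ Q)" using wf by (auto simp: wfq_def gc_simps)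
    show "root (gcQ Q) \<in> all_nodes (gcQ Q)" using rootQ by (auto simp: all_nodes_def gc_simps)
  next
    fix v assume "v \<in> inodes (gcQ Q)"
    then show "ind (gcQ Q) v < n" using wf by (auto simp: wfq_def gc_simps)
  next
    fix v k assume v: "v \<in> inodes (gcQ Q)" and k: "k < (4::nat)"
    have vQ: "v \<in> inodes Q" "(root Q, v) \<in> (edge_rel Q)\<^sup>*" using v by (auto simp: gc_simps)
    have s: "succ Q v k \<in> all_nodes Q" "ind Q v < nind n Q (succ Q v k)" using wfq_succ[OF wf vQ(1) k] by auto
    have sR: "(root Q, succ Q v k) \<in> (edge_rel Q)\<^sup>*" using reach_succ[OF vQ(2) vQ(1) k] .
    show "succ (gcQ Q) v k \<in> all_nodes (gcQ Q)" using s(1) sR by (auto simp: all_nodes_def gc_simps)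
    have "nind n (gcQ Q) (succ Q v k) = nind n Q (succ Q v k)" using sR by (simp add: nind_def gc_simps)
    then show "ind (gcQ Q) v < nind n (gcQ Q) (succ (gcQ Q) v k)" using s(2) by (simp add: gc_simps)
  next
    fix v assume v: "v \<in> all_nodes (gcQ Q)"
    show "(root (gcQ Q), v) \<in> (edge_rel (gcQ Q))\<^sup>*"
    proof (cases "v = tnode Q")
      case True then show ?thesis using reach_gc[OF tR] by (simp add: gc_simps)
    next
      case False
      then have "(root Q, v) \<in> (edge_rel Q)\<^sup>*" using v by (auto simp: all_nodes_def gc_simps)
      then show ?thesis using reach_gc by (simp add: gc_simps)
    qed
  qed
  have iso: "iso_nodes (gcQ Q) = iso_nodes Q" by (simp add: fun_eq_iff iso_nodes_def gc_simps)
  show "reduced (gcQ Q)" using red sub unfolding reduced_def iso by (auto simp: gc_simps)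
  show "normalized (gcQ Q)" using nor sub unfolding normalized_def by (auto simp: gc_simps)
  show "\<forall>r c. qmdd_mat n (gcQ Q) r c = qmdd_mat n Q r c"
    using gc_nsem[of "root Q" Q n 0] by (simp add: qmdd_mat_def gc_simps)
qed

lemma unitary_nz:
  assumes "unitary_mat (2 ^ n) U"
  shows "\<exists>i j. i < 2^n \<and> j < 2^n \<and> U i j \<noteq> 0"
proof (rule ccontr)
  assume "\<not> ?thesis"
  then have z: "\<forall>i j. i < 2^n \<longrightarrow> j < 2^n \<longrightarrow> U i j = 0" by blast
  have "(\<Sum>k<2^n. cnj (U k 0) * U k 0) = 1" using assms unfolding unitary_mat_def by simp
  moreover have "(\<Sum>k<(2::nat)^n. cnj (U k 0) * U k 0) = 0" using z by simp
  ultimately show False by simp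
qed

theorem theorem3p7:
  fixes n :: nat and \<pi> :: "nat set list" and U :: cmatrix
  assumes "n \<ge> 1"
    and "is_lin_trans n \<pi>"
    and "unitary_mat (2 ^ n) U"
  shows "(\<exists>Q. is_ltqmdd n (Q, \<pi>) \<and> lt_reduced (Q, \<pi>) \<and> lt_normalized (Q, \<pi>) \<and>
             mat_eq (2 ^ n) (ltqmdd_sem n (Q, \<pi>)) U) \<and>
         (\<forall>Q1 Q2.
           is_ltqmdd n (Q1, \<pi>) \<and> lt_reduced (Q1, \<pi>) \<and> lt_normalized (Q1, \<pi>) \<and>
           mat_eq (2 ^ n) (ltqmdd_sem n (Q1, \<pi>)) U \<and>
           is_ltqmdd n (Q2, \<pi>) \<and> lt_reduced (Q2, \<pi>) \<and> lt_normalized (Q2, \<pi>) \<and>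
           mat_eq (2 ^ n) (ltqmdd_sem n (Q2, \<pi>)) U
           \<longrightarrow> ltqmdd_iso (Q1, \<pi>) (Q2, \<pi>))"
proof -
  define P where "P = lt_perm n \<pi>"
  have bij: "bij_betw P {0..<2^n} {0..<2^n}" unfolding P_def by (rule lt_perm_bij[OF assms(2)])
  have injP: "inj_on P {0..<2^n}" using bij by (simp add: bij_betw_def)
  have imP: "P ` {0..<2^n} = {0..<2^n}" using bij by (simp add: bij_betw_def)
  have Pl: "P i < 2^n" for i unfolding P_def by (rule lt_perm_less)
  define pinv where "pinv = the_inv_into {0..<2^n} P"
  have pinv: "pinv (P i) = i" if "i < 2^n" for i
    unfolding pinv_def using the_inv_into_f_f[OF injP] that by simp
  define Up where "Up = (\<lambda>r c. U (pinv r) (pinv c))"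
  have fin: "finite (NS n Up)" by (rule finite_NS)
  obtain d where d: "bij_betw d {0..<card (NS n Up)} (NS n Up)" using ex_bij_betw_nat_finite[OF fin] by blast
  define N where "N = card (NS n Up)"
  define e where "e = the_inv_into {0..<N} d"
  have injd: "inj_on d {0..<N}" using d by (simp add: bij_betw_def N_def)
  have A1: "\<forall>Pa\<in>NS n Up. e Pa < N \<and> d (e Pa) = Pa"
  proof
    fix Pa assume Pa: "Pa \<in> NS n Up"
    have "e Pa \<in> {0..<N}" unfolding e_def N_def using bij_betw_apply[OF bij_betw_the_inv_into[OF d] Pa] .
    moreover have "d (e Pa) = Pa" unfolding e_def N_def using f_the_inv_into_f_bij_betw[OF d Pa] .
    ultimately show "e Pa < N \<and> d (e Pa) = Pa" by simp
  qed
  have A2: "\<forall>i<N. d i \<in> NS n Up \<and> e (d i) = i"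
  proof (intro allI impI)
    fix i assume i: "i < N"
    have "d i \<in> NS n Up" using d i bij_betw_apply N_def by fastforce
    moreover have "e (d i) = i" unfolding e_def using the_inv_into_f_f[OF injd] i by simp
    ultimately show "d i \<in> NS n Up \<and> e (d i) = i" by blast
  qed
  define Q0 where "Q0 = mkQ n (sub n 0 0 Up) N e d"
  have wf0: "wfq n Q0" unfolding Q0_def by (rule wfq_Q0[OF A1 A2])
  have red0: "reduced Q0" unfolding Q0_def by (rule reduced_Q0[OF A1 A2])
  have nor0: "normalized Q0" unfolding Q0_def by (rule normalized_Q0[OF A1 A2])
  have mat0: "qmdd_mat n Q0 r c = Up r c" if "r < 2^n" "c < 2^n" for r c
    unfolding Q0_def by (rule mat_Q0[OF A1 A2 that])
  note G = gc_props[OF wf0 red0 nor0]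
  define Q where "Q = gcQ Q0"
  have ex: "is_ltqmdd n (Q, \<pi>) \<and> lt_reduced (Q, \<pi>) \<and> lt_normalized (Q, \<pi>) \<and>
             mat_eq (2 ^ n) (ltqmdd_sem n (Q, \<pi>)) U"
  proof (intro conjI)
    show "is_ltqmdd n (Q, \<pi>)" using G(1) assms(2) by (simp add: is_ltqmdd_def Q_def)
    show "lt_reduced (Q, \<pi>)" using G(2) by (simp add: lt_reduced_def Q_def)
    show "lt_normalized (Q, \<pi>)" using G(3) by (simp add: lt_normalized_def Q_def)
    show "mat_eq (2 ^ n) (ltqmdd_sem n (Q, \<pi>)) U"
      unfolding mat_eq_def
    proof (intro allI impI)
      fix i j :: nat assume i: "i < 2^n" and j: "j < 2^n"
      have "ltqmdd_sem n (Q, \<pi>) i j = qmdd_mat n Q (P i) (P j)"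
        by (simp add: ltqmdd_sem_def lt_mat_def P_def)
      also have "\<dots> = Up (P i) (P j)" using G(4) mat0 Pl unfolding Q_def by simp
      also have "\<dots> = U i j" using pinv i j unfolding Up_def by simp
      finally show "ltqmdd_sem n (Q, \<pi>) i j = U i j" .
    qed
  qed
  have un: "ltqmdd_iso (Q1, \<pi>) (Q2, \<pi>)"
    if h: "is_ltqmdd n (Q1, \<pi>) \<and> lt_reduced (Q1, \<pi>) \<and> lt_normalized (Q1, \<pi>) \<and>
           mat_eq (2 ^ n) (ltqmdd_sem n (Q1, \<pi>)) U \<and>
           is_ltqmdd n (Q2, \<pi>) \<and> lt_reduced (Q2, \<pi>) \<and> lt_normalized (Q2, \<pi>) \<and>
           mat_eq (2 ^ n) (ltqmdd_sem n (Q2, \<pi>)) U" for Q1 Q2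
  proof -
    have q1: "is_qmdd n Q1" "reduced Q1" "normalized Q1" and q2: "is_qmdd n Q2" "reduced Q2" "normalized Q2"
      using h by (auto simp: is_ltqmdd_def lt_reduced_def lt_normalized_def)
    have m1: "qmdd_mat n Q1 (P i) (P j) = U i j" if "i < 2^n" "j < 2^n" for i j
      using h that unfolding mat_eq_def ltqmdd_sem_def lt_mat_def P_def by simp
    have m2: "qmdd_mat n Q2 (P i) (P j) = U i j" if "i < 2^n" "j < 2^n" for i j
      using h that unfolding mat_eq_def ltqmdd_sem_def lt_mat_def P_def by simp
    have surj: "\<exists>i<2^n. P i = r" if "r < 2^n" for r
    proof -
      have "r \<in> P ` {0..<2^n}" using imP that by simp
      then show ?thesis by auto
    qed
    have eq: "\<forall>r c. r < 2^n \<longrightarrow> c < 2^n \<longrightarrow> qmdd_mat n Q1 r c = qmdd_mat n Q2 r c"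
    proof (intro allI impI)
      fix r c :: nat assume r: "r < 2^n" and c: "c < 2^n"
      obtain i where i: "i < 2^n" "P i = r" using surj[OF r] by blast
      obtain j where j: "j < 2^n" "P j = c" using surj[OF c] by blast
      show "qmdd_mat n Q1 r c = qmdd_mat n Q2 r c" using m1[OF i(1) j(1)] m2[OF i(1) j(1)] i j by simp
    qed
    obtain i j where ij: "i < 2^n" "j < 2^n" "U i j \<noteq> 0" using unitary_nz[OF assms(3)] by blast
    have w1: "root_wt Q1 \<noteq> 0"
    proof
      assume "root_wt Q1 = 0"
      then have "qmdd_mat n Q1 (P i) (P j) = 0" by (simp add: qmdd_mat_def)
      then show False using m1[OF ij(1,2)] ij(3) by simp
    qed
    have w2: "root_wt Q2 \<noteq> 0"
    proof
      assume "root_wt Q2 = 0"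
      then have "qmdd_mat n Q2 (P i) (P j) = 0" by (simp add: qmdd_mat_def)
      then show False using m2[OF ij(1,2)] ij(3) by simp
    qed
    have "qmdd_iso Q1 Q2" by (rule unique_iso[OF q1 q2 w1 w2 eq])
    then show ?thesis by (simp add: ltqmdd_iso_def)
  qed
  show ?thesis using ex un by blast
qed

end
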